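(* Let $G$ be a connected graph of order $n\geq 3$ with $|E(G)|\geq\binom{n-2}{2}+2$. Then $prc(G)=\chi'(G)$, or $G$ is isomorphic to one of $P_4$, $Z_2$, $G_{6.3}$.
   Context: A path in an edge-coloured graph is a rainbow path if its edges receive pairwise distinct colours. The proper rainbow connection number $prc(G)$ of a connected graph is the minimum number of colours in a proper edge-colouring (adjacent edges get distinct colours) such that every two distinct vertices are joined by a rainbow path; $\chi'(G)$ is the chromatic index. $P_4$ is the path on 4 vertices. $Z_2$ is the graph on vertices $a,b,c,d,e$ with edges $ab,bc,ca,ad,de$ (a triangle with a pendant path of length 2 attached at one triangle vertex). $G_{6.3}$ is the graph on vertices $w,w_1,w_2,w_3,u_1,u_2$ with the 8 edges $ww_1, ww_2, ww_3, w_2w_3, w_2u_2, u_1u_2, w_1u_1, w_1u_2$. *)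

theory Defs
  imports Main
begin

definition simple_graph :: "'a set \<Rightarrow> 'a set set \<Rightarrow> bool" where
  "simple_graph V E \<longleftrightarrow> finite V \<and> (\<forall>e\<in>E. \<exists>x y. x \<in> V \<and> y \<in> V \<and> x \<noteq> y \<and> e = {x, y})"

definition is_path :: "'a set \<Rightarrow> 'a set set \<Rightarrow> 'a list \<Rightarrow> bool" where
  "is_path V E xs \<longleftrightarrow> xs \<noteq> [] \<and> distinct xs \<and> set xs \<subseteq> V \<and>
     (\<forall>i. Suc i < length xs \<longrightarrow> {xs ! i, xs ! Suc i} \<in> E)"

definition path_edges :: "'a list \<Rightarrow> 'a set list" where
  "path_edges xs = map (\<lambda>(a, b). {a, b}) (zip xs (tl xs))"

definition connected_graph :: "'a set \<Rightarrow> 'a set set \<Rightarrow> bool" where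
  "connected_graph V E \<longleftrightarrow> simple_graph V E \<and> V \<noteq> {} \<and>
     (\<forall>u\<in>V. \<forall>v\<in>V. \<exists>xs. is_path V E xs \<and> hd xs = u \<and> last xs = v)"

definition proper_edge_colouring :: "'a set set \<Rightarrow> ('a set \<Rightarrow> nat) \<Rightarrow> bool" where
  "proper_edge_colouring E c \<longleftrightarrow>
     (\<forall>e\<in>E. \<forall>f\<in>E. e \<noteq> f \<and> e \<inter> f \<noteq> {} \<longrightarrow> c e \<noteq> c f)"

definition rainbow_path :: "'a set \<Rightarrow> 'a set set \<Rightarrow> ('a set \<Rightarrow> nat) \<Rightarrow> 'a list \<Rightarrow> bool" where
  "rainbow_path V E c xs \<longleftrightarrow> is_path V E xs \<and> distinct (map c (path_edges xs))"

definition rainbow_connected :: "'a set \<Rightarrow> 'a set set \<Rightarrow> ('a set \<Rightarrow> nat) \<Rightarrow> bool" where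
  "rainbow_connected V E c \<longleftrightarrow>
     (\<forall>u\<in>V. \<forall>v\<in>V. u \<noteq> v \<longrightarrow> (\<exists>xs. rainbow_path V E c xs \<and> hd xs = u \<and> last xs = v))"

definition chromatic_index :: "'a set set \<Rightarrow> nat" where
  "chromatic_index E = (LEAST k. \<exists>c. proper_edge_colouring E c \<and> c ` E \<subseteq> {..<k})"

definition prc :: "'a set \<Rightarrow> 'a set set \<Rightarrow> nat" where
  "prc V E = (LEAST k. \<exists>c. proper_edge_colouring E c \<and> c ` E \<subseteq> {..<k} \<and> rainbow_connected V E c)"

definition graph_iso :: "'a set \<Rightarrow> 'a set set \<Rightarrow> 'b set \<Rightarrow> 'b set set \<Rightarrow> bool" where
  "graph_iso V E V' E' \<longleftrightarrow> (\<exists>f. bij_betw f V V' \<and> (\<forall>x\<in>V. \<forall>y\<in>V. {x, y} \<in> E \<longleftrightarrow> {f x, f y} \<in> E'))"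

definition P4_V :: "nat set" where "P4_V = {0, 1, 2, 3}"
definition P4_E :: "nat set set" where "P4_E = {{0, 1}, {1, 2}, {2, 3}}"

definition Z2_V :: "nat set" where "Z2_V = {0, 1, 2, 3, 4}"
definition Z2_E :: "nat set set" where "Z2_E = {{0, 1}, {1, 2}, {2, 0}, {0, 3}, {3, 4}}"

text \<open>G_6.3: w,w1,w2,w3,u1,u2 = 0,1,2,3,4,5;
  edges w w1, w w2, w w3, w2 w3, w2 u2, u1 u2, w1 u1, w1 u2.\<close>
definition G63_V :: "nat set" where "G63_V = {0, 1, 2, 3, 4, 5}"
definition G63_E :: "nat set set" where
  "G63_E = {{0, 1}, {0, 2}, {0, 3}, {2, 3}, {2, 5}, {4, 5}, {1, 4}, {1, 5}}"

end

theory Submission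
  imports Defs
begin

lemma is_path_Cons2:
  "is_path V E (x # y # xs) \<longleftrightarrow> x \<notin> set (y # xs) \<and> x \<in> V \<and> {x, y} \<in> E \<and> is_path V E (y # xs)"
  unfolding is_path_def
  by (auto simp: nth_Cons split: nat.splits)

lemma is_path_single: "is_path V E [x] \<longleftrightarrow> x \<in> V"
  unfolding is_path_def by auto

lemma path_edges_Cons2: "path_edges (x # y # xs) = {x, y} # path_edges (y # xs)"
  unfolding path_edges_def by simp

lemma path_edges_single: "path_edges [x] = []"
  unfolding path_edges_def by simp

lemma path_edges_Nil: "path_edges [] = []"
  unfolding path_edges_def by simp

lemmas path_simps = is_path_Cons2 is_path_single path_edges_Cons2 path_edges_single
  rainbow_path_def

lemma is_path_alt:
  "is_path V E xs \<longleftrightarrow> xs \<noteq> [] \<and> distinct xs \<and> set xs \<subseteq> V \<and> set (path_edges xs) \<subseteq> E"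
proof (induction xs rule: induct_list012)
  case 1 then show ?case by (simp add: is_path_def)
next
  case (2 x) then show ?case by (simp add: is_path_single path_edges_single)
next
  case (3 x y zs) then show ?case by (auto simp: is_path_Cons2 path_edges_Cons2)
qed

lemma path_edges_snoc: "xs \<noteq> [] \<Longrightarrow> path_edges (xs @ [y]) = path_edges xs @ [{last xs, y}]"
proof (induction xs rule: induct_list012)
  case 1 then show ?case by simp
next
  case (2 x) then show ?case by (simp add: path_edges_Cons2 path_edges_single)
next
  case (3 x y zs) then show ?case by (simp add: path_edges_Cons2)
qed

lemma path_edges_rev: "path_edges (rev xs) = rev (path_edges xs)"
proof (induction xs rule: induct_list012)
  case 1 then show ?case by (simp add: path_edges_Nil)
next
  case (2 x) then show ?case by (simp add: path_edges_single)
next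
  case (3 x y zs)
  have "path_edges (rev (x # y # zs)) = path_edges (rev (y # zs) @ [x])" by simp
  also have "\<dots> = path_edges (rev (y # zs)) @ [{last (rev (y # zs)), x}]"
    by (rule path_edges_snoc) simp
  also have "\<dots> = rev (path_edges (y # zs)) @ [{x, y}]"
    using 3 by (simp add: insert_commute)
  finally show ?case by (simp add: path_edges_Cons2)
qed

lemma rainbow_path_rev: "rainbow_path V E c xs \<Longrightarrow> rainbow_path V E c (rev xs)"
  unfolding rainbow_path_def is_path_alt by (simp add: path_edges_rev rev_map[symmetric])

definition nb :: "'a set \<Rightarrow> 'a set set \<Rightarrow> 'a \<Rightarrow> 'a set" where
  "nb V E w = {z \<in> V. {w, z} \<in> E}"

locale dg =
  fixes V :: "'a set" and E :: "'a set set"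
  assumes conn: "connected_graph V E"
    and n3: "card V \<ge> 3"
    and cntE: "card E \<ge> ((card V - 2) choose 2) + 2"
begin

lemma sg: "simple_graph V E" using conn by (simp add: connected_graph_def)

lemma finV: "finite V" using sg by (simp add: simple_graph_def)

lemma edgeE: "e \<in> E \<Longrightarrow> \<exists>x y. x \<in> V \<and> y \<in> V \<and> x \<noteq> y \<and> e = {x, y}"
  using sg by (simp add: simple_graph_def)

lemma E_sub: "E \<subseteq> Pow V" using edgeE by blast

lemma finE: "finite E" using E_sub finV by (meson finite_Pow_iff finite_subset)

lemma no_loop: "{x} \<notin> E"
proof
  assume "{x} \<in> E"
  then obtain a b where "a \<noteq> b" "{x} = {a, b}" using edgeE by blast
  then show False by (metis insert_iff singletonD)
qed

lemma edge_in: "{x, y} \<in> E \<Longrightarrow> x \<in> V \<and> y \<in> V \<and> x \<noteq> y"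
proof -
  assume e: "{x, y} \<in> E"
  then obtain a b where ab: "a \<in> V" "b \<in> V" "a \<noteq> b" "{x, y} = {a, b}" using edgeE by blast
  then have "x \<noteq> y" by (metis insert_absorb2 insert_iff singletonD)
  moreover have "x \<in> V" "y \<in> V" using ab by (auto simp: doubleton_eq_iff)
  ultimately show ?thesis by simp
qed

lemma key_count:
  assumes u: "u \<in> V" and v: "v \<in> V" and uv: "u \<noteq> v" and nuv: "{u, v} \<notin> E"
    and N: "N \<subseteq> {e. e \<subseteq> V - {u, v} \<and> card e = 2}" and NE: "N \<inter> E = {}"
  shows "card N + 2 \<le> card (nb V E u) + card (nb V E v)"
proof -
  let ?S = "V - {u, v}"
  let ?P = "{e. e \<subseteq> ?S \<and> card e = 2}"
  have finS: "finite ?S" using finV by simp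
  have cS: "card ?S = card V - 2" using u v uv finV by (simp add: card_Diff_subset)
  have cP: "card ?P = (card V - 2) choose 2" using n_subsets[OF finS, of 2] cS by simp
  have finP: "finite ?P" using finS by (simp add: finite_subset)
  have sub: "E \<subseteq> ((\<lambda>w. {u, w}) ` nb V E u) \<union> ((\<lambda>w. {v, w}) ` nb V E v) \<union> (?P - N)"
  proof
    fix e assume e: "e \<in> E"
    then obtain x y where xy: "x \<in> V" "y \<in> V" "x \<noteq> y" "e = {x, y}" using edgeE by blast
    show "e \<in> ((\<lambda>w. {u, w}) ` nb V E u) \<union> ((\<lambda>w. {v, w}) ` nb V E v) \<union> (?P - N)"
    proof (cases "u \<in> e")
      case True
      then have "e = {u, x} \<and> x \<in> nb V E u \<or> e = {u, y} \<and> y \<in> nb V E u"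
        using xy e by (auto simp: nb_def insert_commute)
      then show ?thesis by blast
    next
      case nu: False
      show ?thesis
      proof (cases "v \<in> e")
        case True
        then have "e = {v, x} \<and> x \<in> nb V E v \<or> e = {v, y} \<and> y \<in> nb V E v"
          using xy e by (auto simp: nb_def insert_commute)
        then show ?thesis by blast
      next
        case False
        then have "e \<in> ?P" using nu xy by auto
        moreover have "e \<notin> N" using NE e by blast
        ultimately show ?thesis by blast
      qed
    qed
  qed
  have "card E \<le> card (((\<lambda>w. {u, w}) ` nb V E u) \<union> ((\<lambda>w. {v, w}) ` nb V E v) \<union> (?P - N))"
  proof (rule card_mono[OF _ sub])
    have "finite (nb V E u)" "finite (nb V E v)" using finV by (auto simp: nb_def)
    then show "finite (((\<lambda>w. {u, w}) ` nb V E u) \<union> ((\<lambda>w. {v, w}) ` nb V E v) \<union> (?P - N))"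
      using finP by blast
  qed
  also have "\<dots> \<le> card ((\<lambda>w. {u, w}) ` nb V E u) + card ((\<lambda>w. {v, w}) ` nb V E v) + card (?P - N)"
    by (meson card_Un_le add_le_mono le_refl order_trans)
  also have "\<dots> \<le> card (nb V E u) + card (nb V E v) + card (?P - N)"
  proof -
    have "finite (nb V E u)" "finite (nb V E v)" using finV by (auto simp: nb_def)
    then have "card ((\<lambda>w. {u, w}) ` nb V E u) \<le> card (nb V E u)"
      "card ((\<lambda>w. {v, w}) ` nb V E v) \<le> card (nb V E v)"
      by (auto intro: card_image_le)
    then show ?thesis by linarith
  qed
  also have "card (?P - N) = card ?P - card N"
    by (rule card_Diff_subset) (use N finP in \<open>auto intro: finite_subset\<close>)
  finally have "card E \<le> card (nb V E u) + card (nb V E v) + (((card V - 2) choose 2) - card N)"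
    using cP by simp
  moreover have "card N \<le> (card V - 2) choose 2"
    unfolding cP[symmetric] by (rule card_mono[OF finP N])
  ultimately show ?thesis using cntE by linarith
qed

lemma nb_nonempty: "u \<in> V \<Longrightarrow> nb V E u \<noteq> {}"
proof -
  assume u: "u \<in> V"
  obtain w where w: "w \<in> V" "w \<noteq> u"
  proof -
    have "\<not> V \<subseteq> {u}"
    proof
      assume "V \<subseteq> {u}"
      then have "card V \<le> card {u}" by (intro card_mono) auto
      then show False using n3 by simp
    qed
    then show ?thesis using that by blast
  qed
  then obtain xs where xs: "is_path V E xs" "hd xs = u" "last xs = w"
    using conn u by (auto simp: connected_graph_def)
  have "xs \<noteq> []" using xs(1) by (simp add: is_path_def)
  then obtain rest where r: "xs = u # rest" using xs(2) by (cases xs) auto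
  have "rest \<noteq> []" using r xs(3) w(2) by auto
  then obtain y ys where "rest = y # ys" by (cases rest) auto
  then have "xs = u # y # ys" using r by simp
  then have "{u, y} \<in> E" "y \<in> V" using xs(1) edge_in by (auto simp: is_path_Cons2)
  then show ?thesis by (auto simp: nb_def)
qed

end

locale dgc = dg +
  fixes c :: "'a set \<Rightarrow> nat"
  assumes proper: "proper_edge_colouring E c"
begin

definition bad :: "'a \<Rightarrow> 'a \<Rightarrow> bool" where
  "bad u v \<longleftrightarrow> u \<in> V \<and> v \<in> V \<and> u \<noteq> v \<and> \<not> (\<exists>xs. rainbow_path V E c xs \<and> hd xs = u \<and> last xs = v)"

lemma col_ne: "{a, b} \<in> E \<Longrightarrow> {b, d} \<in> E \<Longrightarrow> a \<noteq> d \<Longrightarrow> c {a, b} \<noteq> c {b, d}"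
  using proper unfolding proper_edge_colouring_def
  by (metis doubleton_eq_iff insert_disjoint(1) insert_iff)

lemma col_ne': "{b, a} \<in> E \<Longrightarrow> {b, d} \<in> E \<Longrightarrow> a \<noteq> d \<Longrightarrow> c {b, a} \<noteq> c {b, d}"
  using col_ne by (metis insert_commute)

lemma bad_sym: "bad u v \<Longrightarrow> bad v u"
  unfolding bad_def
proof (elim conjE, intro conjI notI)
  assume h: "\<not> (\<exists>xs. rainbow_path V E c xs \<and> hd xs = u \<and> last xs = v)"
  assume "\<exists>xs. rainbow_path V E c xs \<and> hd xs = v \<and> last xs = u"
  then obtain xs where xs: "rainbow_path V E c xs" "hd xs = v" "last xs = u" by blast
  then have ne: "xs \<noteq> []" by (simp add: rainbow_path_def is_path_def)
  have "rainbow_path V E c (rev xs)" using xs(1) by (rule rainbow_path_rev)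
  moreover have "hd (rev xs) = u" "last (rev xs) = v" using ne xs by (auto simp: hd_rev last_rev)
  ultimately show False using h by blast
qed auto

lemma rp2: "{a, b} \<in> E \<Longrightarrow> rainbow_path V E c [a, b]"
  using edge_in[of a b] by (simp add: path_simps)

lemma rp3: "{a, b} \<in> E \<Longrightarrow> {b, d} \<in> E \<Longrightarrow> a \<noteq> d \<Longrightarrow> rainbow_path V E c [a, b, d]"
  using edge_in[of a b] edge_in[of b d] col_ne[of a b d] by (simp add: path_simps)

lemma rp4: "{a, b} \<in> E \<Longrightarrow> {b, d} \<in> E \<Longrightarrow> {d, e} \<in> E \<Longrightarrow> distinct [a, b, d, e] \<Longrightarrow>
  c {a, b} \<noteq> c {d, e} \<Longrightarrow> rainbow_path V E c [a, b, d, e]"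
  using edge_in[of a b] edge_in[of b d] edge_in[of d e] col_ne[of a b d] col_ne[of b d e]
  by (simp add: path_simps)

lemma rp5: "{a, b} \<in> E \<Longrightarrow> {b, d} \<in> E \<Longrightarrow> {d, e} \<in> E \<Longrightarrow> {e, f} \<in> E \<Longrightarrow> distinct [a, b, d, e, f] \<Longrightarrow>
  c {a, b} \<noteq> c {d, e} \<Longrightarrow> c {a, b} \<noteq> c {e, f} \<Longrightarrow> c {b, d} \<noteq> c {e, f} \<Longrightarrow>
  rainbow_path V E c [a, b, d, e, f]"
  using edge_in[of a b] edge_in[of b d] edge_in[of d e] edge_in[of e f]
    col_ne[of a b d] col_ne[of b d e] col_ne[of d e f]
  by (simp add: path_simps)

lemma bad_D: "bad u v \<Longrightarrow> rainbow_path V E c xs \<Longrightarrow> hd xs = u \<Longrightarrow> last xs = v \<Longrightarrow> False"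
  unfolding bad_def by blast

lemma bad_noedge: "bad u v \<Longrightarrow> {u, v} \<notin> E"
  using rp2[of u v] bad_D[of u v "[u, v]"] by auto

lemma bad_nocommon: "bad u v \<Longrightarrow> {u, w} \<in> E \<Longrightarrow> {w, v} \<in> E \<Longrightarrow> False"
  using rp3[of u w v] bad_D[of u v "[u, w, v]"] bad_def by auto

lemma bad4: "bad u v \<Longrightarrow> {u, b} \<in> E \<Longrightarrow> {b, d} \<in> E \<Longrightarrow> {d, v} \<in> E \<Longrightarrow> distinct [u, b, d, v] \<Longrightarrow>
  c {u, b} = c {d, v}"
  using rp4[of u b d v] bad_D[of u v "[u, b, d, v]"] by auto

lemma bad5: "bad u v \<Longrightarrow> {u, b} \<in> E \<Longrightarrow> {b, d} \<in> E \<Longrightarrow> {d, e} \<in> E \<Longrightarrow> {e, v} \<in> E \<Longrightarrow>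
  distinct [u, b, d, e, v] \<Longrightarrow>
  c {u, b} = c {d, e} \<or> c {u, b} = c {e, v} \<or> c {b, d} = c {e, v}"
  using rp5[of u b d e v] bad_D[of u v "[u, b, d, e, v]"] by auto

end

context dgc begin

abbreviation "A u \<equiv> nb V E u"

definition P :: "'a \<Rightarrow> 'a \<Rightarrow> ('a \<times> 'a) set" where
  "P u v = {(x, y). x \<in> A u \<and> y \<in> A v \<and> {x, y} \<notin> E}"
definition Q :: "'a \<Rightarrow> 'a \<Rightarrow> ('a \<times> 'a) set" where
  "Q u v = {(x, y). x \<in> A u \<and> y \<in> A v \<and> {x, y} \<in> E}"

lemma nbI: "{u, x} \<in> E \<Longrightarrow> x \<in> A u"
  using edge_in by (simp add: nb_def)
lemma nbD: "x \<in> A u \<Longrightarrow> {u, x} \<in> E"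
  by (simp add: nb_def)
lemma nbD': "x \<in> A u \<Longrightarrow> {x, u} \<in> E"
  by (simp add: nb_def insert_commute)

lemma finA: "finite (A u)" using finV by (simp add: nb_def)

lemma bad_basic:
  assumes "bad u v"
  shows "u \<in> V" "v \<in> V" "u \<noteq> v" "A u \<subseteq> V - {u, v}" "A v \<subseteq> V - {u, v}" "A u \<inter> A v = {}"
proof -
  show uv: "u \<in> V" "v \<in> V" "u \<noteq> v" using assms by (auto simp: bad_def)
  have ne: "{u, v} \<notin> E" "{v, u} \<notin> E" using bad_noedge[OF assms] by (auto simp: insert_commute)
  show "A u \<subseteq> V - {u, v}" using ne no_loop[of u] by (auto simp: nb_def)
  show "A v \<subseteq> V - {u, v}" using ne no_loop[of v] by (auto simp: nb_def)
  show "A u \<inter> A v = {}"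
  proof (rule ccontr)
    assume "A u \<inter> A v \<noteq> {}"
    then obtain w where "{u, w} \<in> E" "{v, w} \<in> E" by (auto simp: nb_def)
    then show False using bad_nocommon[OF assms, of w] by (simp add: insert_commute)
  qed
qed

lemma bad_col:
  assumes "bad u v" "x \<in> A u" "y \<in> A v" "{x, y} \<in> E"
  shows "c {u, x} = c {y, v}"
proof -
  note b = bad_basic[OF assms(1)]
  have "x \<noteq> y" using b(6) assms by blast
  then have "distinct [u, x, y, v]" using b assms(2,3) by auto
  then show ?thesis using bad4[OF assms(1) nbD[OF assms(2)] assms(4) nbD'[OF assms(3)]] by simp
qed

lemma Q_inj1:
  assumes "bad u v" "x \<in> A u" "y \<in> A v" "y' \<in> A v" "{x, y} \<in> E" "{x, y'} \<in> E"
  shows "y = y'"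
proof (rule ccontr)
  assume "y \<noteq> y'"
  have "c {y, v} = c {y', v}" using bad_col[OF assms(1,2,3,5)] bad_col[OF assms(1,2,4,6)] by simp
  moreover have "c {y, v} \<noteq> c {v, y'}" using col_ne[of y v y'] nbD'[OF assms(3)] nbD[OF assms(4)] \<open>y \<noteq> y'\<close> by simp
  ultimately show False by (simp add: insert_commute)
qed

lemma Q_inj2:
  assumes "bad u v" "x \<in> A u" "x' \<in> A u" "y \<in> A v" "{x, y} \<in> E" "{x', y} \<in> E"
  shows "x = x'"
proof (rule ccontr)
  assume "x \<noteq> x'"
  have "c {u, x} = c {u, x'}" using bad_col[OF assms(1,2,4,5)] bad_col[OF assms(1,3,4,6)] by simp
  moreover have "c {u, x} \<noteq> c {u, x'}" using col_ne'[of u x x'] nbD[OF assms(2)] nbD[OF assms(3)] \<open>x \<noteq> x'\<close> by simp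
  ultimately show False by simp
qed

lemma cardQ1: "bad u v \<Longrightarrow> card (Q u v) \<le> card (A u)"
proof -
  assume b: "bad u v"
  have "inj_on fst (Q u v)"
    by (rule inj_onI) (auto simp: Q_def intro: Q_inj1[OF b])
  then have "card (Q u v) = card (fst ` Q u v)" by (rule card_image[symmetric])
  also have "\<dots> \<le> card (A u)" by (rule card_mono[OF finA]) (auto simp: Q_def)
  finally show ?thesis .
qed

lemma cardQ2: "bad u v \<Longrightarrow> card (Q u v) \<le> card (A v)"
proof -
  assume b: "bad u v"
  have "inj_on snd (Q u v)"
    by (rule inj_onI) (auto simp: Q_def intro: Q_inj2[OF b])
  then have "card (Q u v) = card (snd ` Q u v)" by (rule card_image[symmetric])
  also have "\<dots> \<le> card (A v)" by (rule card_mono[OF finA]) (auto simp: Q_def)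
  finally show ?thesis .
qed

lemma cardPQ: "card (P u v) + card (Q u v) = card (A u) * card (A v)"
proof -
  have "P u v \<union> Q u v = A u \<times> A v" "P u v \<inter> Q u v = {}" by (auto simp: P_def Q_def)
  moreover have "finite (A u \<times> A v)" using finA by simp
  ultimately show ?thesis
    by (metis card_Un_disjoint card_cartesian_product finite_Un)
qed

lemma pair_inj:
  assumes "bad u v"
  shows "inj_on (\<lambda>(x, y). {x, y}) (A u \<times> A v)"
proof (rule inj_onI, clarify)
  fix x y x' y' assume h: "x \<in> A u" "y \<in> A v" "x' \<in> A u" "y' \<in> A v" "{x, y} = {x', y'}"
  have d: "A u \<inter> A v = {}" by (rule bad_basic(6)[OF assms])
  from h(5) have "x = x' \<and> y = y' \<or> x = y' \<and> y = x'" by (auto simp: doubleton_eq_iff)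
  then show "x = x' \<and> y = y'" using d h by auto
qed

lemma cardP: "bad u v \<Longrightarrow> card (P u v) + 2 \<le> card (A u) + card (A v)"
proof -
  assume b: "bad u v"
  note bb = bad_basic[OF b]
  let ?N = "(\<lambda>(x, y). {x, y}) ` P u v"
  have inj: "inj_on (\<lambda>(x, y). {x, y}) (P u v)"
    by (rule inj_on_subset[OF pair_inj[OF b]]) (auto simp: P_def)
  have "card ?N + 2 \<le> card (A u) + card (A v)"
  proof (rule key_count[OF bb(1,2,3) bad_noedge[OF b]])
    show "?N \<subseteq> {e. e \<subseteq> V - {u, v} \<and> card e = 2}"
    proof clarify
      fix x y assume "(x, y) \<in> P u v"
      then have "x \<in> A u" "y \<in> A v" by (auto simp: P_def)
      then have "x \<in> V - {u, v}" "y \<in> V - {u, v}" "x \<noteq> y" using bb by blast+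
      then show "{x, y} \<subseteq> V - {u, v} \<and> card {x, y} = 2" by auto
    qed
    show "?N \<inter> E = {}" by (auto simp: P_def)
  qed
  then show ?thesis using card_image[OF inj] by simp
qed

lemma cases_ab:
  assumes b: "bad u v"
  shows "card (A u) = 1 \<or> card (A v) = 1 \<or> (card (A u) = 2 \<and> card (A v) = 2)"
proof -
  note bb = bad_basic[OF b]
  have a1: "card (A u) \<ge> 1" using nb_nonempty[OF bb(1)] finA by (simp add: Suc_le_eq card_gt_0_iff)
  have b1: "card (A v) \<ge> 1" using nb_nonempty[OF bb(2)] finA by (simp add: Suc_le_eq card_gt_0_iff)
  have h1: "card (A u) * card (A v) + 2 \<le> card (A u) + card (A v) + card (A u)"
    using cardP[OF b] cardPQ[of u v] cardQ1[OF b] by linarith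
  have h2: "card (A u) * card (A v) + 2 \<le> card (A u) + card (A v) + card (A v)"
    using cardP[OF b] cardPQ[of u v] cardQ2[OF b] by linarith
  show ?thesis
  proof (rule ccontr)
    assume "\<not> ?thesis"
    then have "card (A u) \<ge> 2" "card (A v) \<ge> 2" "card (A u) \<ge> 3 \<or> card (A v) \<ge> 3" using a1 b1 by auto
    define a where "a = card (A u) - 2"
    define b where "b = card (A v) - 2"
    have ab: "card (A u) = a + 2" "card (A v) = b + 2" "a \<ge> 1 \<or> b \<ge> 1"
      using \<open>card (A u) \<ge> 2\<close> \<open>card (A v) \<ge> 2\<close> \<open>card (A u) \<ge> 3 \<or> card (A v) \<ge> 3\<close>
      by (auto simp: a_def b_def)
    have "b = 0" using h1 unfolding ab(1,2) by (simp add: algebra_simps)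
    moreover have "a = 0" using h2 unfolding ab(1,2) by (simp add: algebra_simps)
    ultimately show False using ab(3) by simp
  qed
qed

lemma maximal:
  assumes b: "bad u v" and eq: "card (P u v) + 2 \<ge> card (A u) + card (A v)"
    and p: "p \<in> V - {u, v}" and q: "q \<in> V - {u, v}" and pq: "p \<noteq> q" and ne: "{p, q} \<notin> E"
  shows "\<exists>x y. (x, y) \<in> P u v \<and> {p, q} = {x, y}"
proof (rule ccontr)
  assume nex: "\<not> ?thesis"
  note bb = bad_basic[OF b]
  let ?N = "insert {p, q} ((\<lambda>(x, y). {x, y}) ` P u v)"
  have inj: "inj_on (\<lambda>(x, y). {x, y}) (P u v)"
    by (rule inj_on_subset[OF pair_inj[OF b]]) (auto simp: P_def)
  have finP: "finite (P u v)"
    by (rule finite_subset[of _ "A u \<times> A v"]) (auto simp: P_def finA)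
  have nin: "{p, q} \<notin> (\<lambda>(x, y). {x, y}) ` P u v" using nex by auto
  have "card ?N + 2 \<le> card (A u) + card (A v)"
  proof (rule key_count[OF bb(1,2,3) bad_noedge[OF b]])
    show "?N \<subseteq> {e. e \<subseteq> V - {u, v} \<and> card e = 2}"
    proof (rule insert_subsetI)
      show "{p, q} \<in> {e. e \<subseteq> V - {u, v} \<and> card e = 2}" using p q pq by auto
      show "(\<lambda>(x, y). {x, y}) ` P u v \<subseteq> {e. e \<subseteq> V - {u, v} \<and> card e = 2}"
      proof clarify
        fix x y assume "(x, y) \<in> P u v"
        then have "x \<in> A u" "y \<in> A v" by (auto simp: P_def)
        then have "x \<in> V - {u, v}" "y \<in> V - {u, v}" "x \<noteq> y" using bb by blast+
        then show "{x, y} \<subseteq> V - {u, v} \<and> card {x, y} = 2" by auto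
      qed
    qed
    show "?N \<inter> E = {}" using ne by (auto simp: P_def)
  qed
  moreover have "card ?N = card (P u v) + 1"
    using nin finP card_image[OF inj] by simp
  ultimately show False using eq by simp
qed

end

definition good :: "'a set \<Rightarrow> 'a set set \<Rightarrow> ('a set \<Rightarrow> nat) \<Rightarrow> nat \<Rightarrow> bool" where
  "good V E c k \<longleftrightarrow> proper_edge_colouring E c \<and> c ` E \<subseteq> {..<k} \<and> rainbow_connected V E c"

definition goal :: "'a set \<Rightarrow> 'a set set \<Rightarrow> bool" where
  "goal V E \<longleftrightarrow> (\<exists>c k z. good V E c k \<and> z \<in> V \<and> k \<le> card (nb V E z)) \<or>
     graph_iso V E P4_V P4_E \<or> graph_iso V E Z2_V Z2_E \<or> graph_iso V E G63_V G63_E"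

lemma path_edges_map: "path_edges (map g xs) = map (\<lambda>e. g ` e) (path_edges xs)"
proof (induction xs rule: induct_list012)
  case 1 then show ?case by (simp add: path_edges_Nil)
next
  case (2 x) then show ?case by (simp add: path_edges_single)
next
  case (3 x y zs) then show ?case by (simp add: path_edges_Cons2)
qed

lemma rc_sym:
  assumes "\<And>p q. p \<in> V \<Longrightarrow> q \<in> V \<Longrightarrow> p \<noteq> q \<Longrightarrow>
     (\<exists>xs. rainbow_path V E c xs \<and> hd xs = p \<and> last xs = q) \<or> (\<exists>xs. rainbow_path V E c xs \<and> hd xs = q \<and> last xs = p)"
  shows "rainbow_connected V E c"
  unfolding rainbow_connected_def
proof (intro ballI impI)
  fix p q assume h: "p \<in> V" "q \<in> V" "p \<noteq> q"
  from assms[OF h] show "\<exists>xs. rainbow_path V E c xs \<and> hd xs = p \<and> last xs = q"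
  proof
    assume "\<exists>xs. rainbow_path V E c xs \<and> hd xs = q \<and> last xs = p"
    then obtain xs where xs: "rainbow_path V E c xs" "hd xs = q" "last xs = p" by blast
    then have ne: "xs \<noteq> []" by (simp add: rainbow_path_def is_path_def)
    show ?thesis
      by (rule exI[of _ "rev xs"]) (use xs ne rainbow_path_rev in \<open>auto simp: hd_rev last_rev\<close>)
  qed
qed

lemma good_transfer:
  assumes bij: "bij_betw f V V'" and corr: "\<forall>p\<in>V. \<forall>q\<in>V. {p, q} \<in> E \<longleftrightarrow> {f p, f q} \<in> E'"
    and sg: "simple_graph V E" and g: "good V' E' c' k"
  shows "good V E (\<lambda>e. c' (f ` e)) k"
proof -
  have inj: "inj_on f V" using bij by (simp add: bij_betw_def)
  have img: "f ` V = V'" using bij by (simp add: bij_betw_def)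
  have edge: "e \<in> E \<Longrightarrow> \<exists>p q. p \<in> V \<and> q \<in> V \<and> p \<noteq> q \<and> e = {p, q}" for e
    using sg by (simp add: simple_graph_def)
  have fe: "e \<in> E \<Longrightarrow> f ` e \<in> E'" for e
  proof -
    assume e: "e \<in> E"
    then obtain p q where "p \<in> V" "q \<in> V" "e = {p, q}" using edge by blast
    then show ?thesis using corr e by auto
  qed
  have esub: "e \<in> E \<Longrightarrow> e \<subseteq> V" for e using edge by blast
  have pr': "proper_edge_colouring E' c'" and col': "c' ` E' \<subseteq> {..<k}" and rc': "rainbow_connected V' E' c'"
    using g by (auto simp: good_def)
  have pr: "proper_edge_colouring E (\<lambda>e. c' (f ` e))"
    unfolding proper_edge_colouring_def
  proof (intro ballI impI)
    fix e1 e2 assume e: "e1 \<in> E" "e2 \<in> E" "e1 \<noteq> e2 \<and> e1 \<inter> e2 \<noteq> {}"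
    have "f ` e1 \<noteq> f ` e2" using e esub inj by (metis inj_on_image_eq_iff)
    moreover have "f ` e1 \<inter> f ` e2 \<noteq> {}" using e by blast
    ultimately show "c' (f ` e1) \<noteq> c' (f ` e2)"
      using pr' fe[OF e(1)] fe[OF e(2)] by (simp add: proper_edge_colouring_def)
  qed
  have col: "(\<lambda>e. c' (f ` e)) ` E \<subseteq> {..<k}" using col' fe by blast
  have rc: "rainbow_connected V E (\<lambda>e. c' (f ` e))"
    unfolding rainbow_connected_def
  proof (intro ballI impI)
    fix p q assume h: "p \<in> V" "q \<in> V" "p \<noteq> q"
    have "f p \<in> V'" "f q \<in> V'" "f p \<noteq> f q" using h inj img by (auto simp: inj_on_eq_iff)
    then obtain xs where xs: "rainbow_path V' E' c' xs" "hd xs = f p" "last xs = f q"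
      using rc' by (auto simp: rainbow_connected_def)
    let ?g = "inv_into V f"
    have ne: "xs \<noteq> []" and dis: "distinct xs" and sV: "set xs \<subseteq> V'" and sE: "set (path_edges xs) \<subseteq> E'"
      and dc: "distinct (map c' (path_edges xs))"
      using xs(1) by (auto simp: rainbow_path_def is_path_alt)
    have ginj: "inj_on ?g V'" using bij by (metis bij_betw_def bij_betw_inv_into)
    have gV: "?g a \<in> V" if "a \<in> V'" for a using that img by (metis inv_into_into)
    have fg: "f (?g a) = a" if "a \<in> V'" for a using that img by (metis f_inv_into_f)
    have pe_ab: "e \<in> set (path_edges xs) \<Longrightarrow> \<exists>a b. a \<in> V' \<and> b \<in> V' \<and> e = {a, b}" for e
    proof -
      assume "e \<in> set (path_edges xs)"
      then obtain i where "i < length (zip xs (tl xs))" "e = (\<lambda>(a, b). {a, b}) (zip xs (tl xs) ! i)"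
        by (auto simp: path_edges_def in_set_conv_nth)
      then have "e = {xs ! i, xs ! Suc i}" "i < length xs" "Suc i < length xs" by (auto simp: nth_tl)
      then show ?thesis using sV nth_mem[of i xs] nth_mem[of "Suc i" xs] by blast
    qed
    have pe_sub': "e \<in> set (path_edges xs) \<Longrightarrow> e \<subseteq> V'" for e
      using pe_ab by blast
    have "rainbow_path V E (\<lambda>e. c' (f ` e)) (map ?g xs)"
      unfolding rainbow_path_def is_path_alt path_edges_map
    proof (intro conjI)
      show "map ?g xs \<noteq> []" using ne by simp
      show "distinct (map ?g xs)" using dis ginj sV by (simp add: distinct_map inj_on_subset)
      show "set (map ?g xs) \<subseteq> V" using sV gV by auto
      show "set (map ((`) ?g) (path_edges xs)) \<subseteq> E"
      proof
        fix e' assume "e' \<in> set (map ((`) ?g) (path_edges xs))"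
        then obtain e where e: "e \<in> set (path_edges xs)" and e': "e' = ?g ` e" by auto
        then have "e \<in> E'" using sE by blast
        then obtain a b where ab: "a \<in> V'" "b \<in> V'" "e = {a, b}"
          using pe_ab[OF e] by blast
        have "{f (?g a), f (?g b)} \<in> E'" using ab fg \<open>e \<in> E'\<close> by simp
        then show "e' \<in> E" using corr gV ab e' by auto
      qed
      have fge: "f ` ?g ` e = e" if "e \<in> set (path_edges xs)" for e
      proof -
        have "f ` ?g ` e = (\<lambda>a. f (?g a)) ` e" by (simp add: image_image)
        also have "\<dots> = (\<lambda>a. a) ` e" using pe_sub'[OF that] fg by (intro image_cong) auto
        finally show ?thesis by simp
      qed
      have meq: "map (\<lambda>e. c' (f ` e)) (map ((`) ?g) (path_edges xs)) = map c' (path_edges xs)"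
        by (simp add: fge)
      show "distinct (map (\<lambda>e. c' (f ` e)) (map ((`) ?g) (path_edges xs)))" unfolding meq by (rule dc)
    qed
    moreover have "hd (map ?g xs) = p" using ne xs(2) h inj by (simp add: hd_map inv_into_f_f)
    moreover have "last (map ?g xs) = q" using ne xs(3) h inj by (simp add: last_map inv_into_f_f)
    ultimately show "\<exists>xs. rainbow_path V E (\<lambda>e. c' (f ` e)) xs \<and> hd xs = p \<and> last xs = q" by blast
  qed
  show ?thesis using pr col rc by (simp add: good_def)
qed

lemma mod_cancel_aux1: "b \<le> c \<Longrightarrow> c < (N::nat) \<Longrightarrow> (a + b) mod N = (a + c) mod N \<Longrightarrow> b = c"
proof -
  assume h: "b \<le> c" "c < N" "(a + b) mod N = (a + c) mod N"
  then have "N dvd (a + c) - (a + b)" using mod_eq_dvd_iff_nat[of "a + b" "a + c" N] by simp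
  then have d: "N dvd c - b" by simp
  show "b = c"
  proof (rule ccontr)
    assume "b \<noteq> c"
    then have "c - b > 0" using h by simp
    then have "N \<le> c - b" using d by (simp add: dvd_imp_le)
    then show False using h by simp
  qed
qed

lemma mod_cancel_aux: "b < (N::nat) \<Longrightarrow> c < N \<Longrightarrow> (a + b) mod N = (a + c) mod N \<Longrightarrow> b = c"
  by (metis mod_cancel_aux1 nat_le_linear)

lemma mod_aux2: "b \<noteq> 1 \<Longrightarrow> b < (N::nat) \<Longrightarrow> 3 \<le> N \<Longrightarrow> (1 + b) mod N \<noteq> 2"
proof (cases "1 + b < N")
  case True
  then show "b \<noteq> 1 \<Longrightarrow> b < N \<Longrightarrow> 3 \<le> N \<Longrightarrow> (1 + b) mod N \<noteq> 2" by simp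
next
  case False
  then show "b \<noteq> 1 \<Longrightarrow> b < N \<Longrightarrow> 3 \<le> N \<Longrightarrow> (1 + b) mod N \<noteq> 2"
    by (metis Suc_eq_plus1_left Suc_lessI mod_self zero_neq_numeral)
qed

context dg begin

lemma proper_local:
  assumes "\<And>w q s. {w, q} \<in> E \<Longrightarrow> {w, s} \<in> E \<Longrightarrow> q \<noteq> s \<Longrightarrow> c {w, q} \<noteq> c {w, s}"
  shows "proper_edge_colouring E c"
  unfolding proper_edge_colouring_def
proof (intro ballI impI)
  fix e1 e2 assume e: "e1 \<in> E" "e2 \<in> E" "e1 \<noteq> e2 \<and> e1 \<inter> e2 \<noteq> {}"
  then obtain w where w: "w \<in> e1" "w \<in> e2" by blast
  obtain a b where ab: "e1 = {a, b}" "a \<noteq> b" using edgeE[OF e(1)] by blast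
  obtain a' b' where ab': "e2 = {a', b'}" "a' \<noteq> b'" using edgeE[OF e(2)] by blast
  obtain q where q: "e1 = {w, q}" using w(1) ab by (auto simp: insert_commute)
  obtain s where s: "e2 = {w, s}" using w(2) ab' by (auto simp: insert_commute)
  have "q \<noteq> s" using q s e by auto
  then show "c e1 \<noteq> c e2" using assms[of w q s] q s e by simp
qed

lemma good_intro:
  assumes "proper_edge_colouring E c'" "\<And>e. e \<in> E \<Longrightarrow> c' e < k" "rainbow_connected V E c'"
  shows "good V E c' k"
  using assms by (auto simp: good_def)

lemma F1:
  assumes uV: "u \<in> V" and vV: "v \<in> V" and xV: "x \<in> V" and yV: "y \<in> V" and dis: "distinct [u, x, y, v]"
    and Au: "nb V E u = {x}" and Av: "nb V E v = {y}"
    and Sfull: "\<And>p q. p \<in> V - {u, v} \<Longrightarrow> q \<in> V - {u, v} \<Longrightarrow> p \<noteq> q \<Longrightarrow> {p, q} \<in> E"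
  shows "goal V E"
proof -
  let ?S = "V - {u, v}"
  have echar: "{p, q} \<in> E \<longleftrightarrow> p \<noteq> q \<and> (p \<in> ?S \<and> q \<in> ?S \<or> (p = u \<and> q = x) \<or> (p = x \<and> q = u) \<or>
      (p = v \<and> q = y) \<or> (p = y \<and> q = v))" if "p \<in> V" "q \<in> V" for p q
  proof
    assume e: "{p, q} \<in> E"
    have pq: "p \<noteq> q" using edge_in[OF e] by simp
    have "{u, q} \<in> E \<Longrightarrow> q = x" using Au by (auto simp: nb_def dest: edge_in)
    moreover have "{v, q} \<in> E \<Longrightarrow> q = y" using Av by (auto simp: nb_def dest: edge_in)
    moreover have "{u, p} \<in> E \<Longrightarrow> p = x" using Au by (auto simp: nb_def dest: edge_in)
    moreover have "{v, p} \<in> E \<Longrightarrow> p = y" using Av by (auto simp: nb_def dest: edge_in)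
    ultimately show "p \<noteq> q \<and> (p \<in> ?S \<and> q \<in> ?S \<or> (p = u \<and> q = x) \<or> (p = x \<and> q = u) \<or>
      (p = v \<and> q = y) \<or> (p = y \<and> q = v))"
      using e pq that by (auto simp: insert_commute)
  next
    assume h: "p \<noteq> q \<and> (p \<in> ?S \<and> q \<in> ?S \<or> (p = u \<and> q = x) \<or> (p = x \<and> q = u) \<or>
      (p = v \<and> q = y) \<or> (p = y \<and> q = v))"
    have "{u, x} \<in> E" "{v, y} \<in> E" using Au Av by (auto simp: nb_def)
    then show "{p, q} \<in> E" using h Sfull by (auto simp: insert_commute)
  qed
  show ?thesis
  proof (cases "card V = 4")
    case True
    have sub: "{u, x, y, v} \<subseteq> V" using uV vV xV yV by auto
    have "card {u, x, y, v} = 4" using dis by simp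
    then have Veq: "V = {u, x, y, v}" using card_subset_eq[OF finV sub] True by simp
    define f where "f z = (if z = u then 0 else if z = x then 1 else if z = y then 2 else (3::nat))" for z
    have "bij_betw f V P4_V"
      unfolding bij_betw_def Veq P4_V_def using dis by (auto simp: f_def inj_on_def)
    moreover have "\<forall>p\<in>V. \<forall>q\<in>V. {p, q} \<in> E \<longleftrightarrow> {f p, f q} \<in> P4_E"
    proof (intro ballI)
      fix p q assume pq: "p \<in> V" "q \<in> V"
      show "{p, q} \<in> E \<longleftrightarrow> {f p, f q} \<in> P4_E"
        unfolding echar[OF pq] using pq dis unfolding Veq
        by (auto simp: f_def P4_E_def doubleton_eq_iff)
    qed
    ultimately have "graph_iso V E P4_V P4_E" unfolding graph_iso_def by blast
    then show ?thesis by (simp add: goal_def)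
  next
    case False
    define N where "N = card V - 2"
    have cS: "card ?S = N" using uV vV dis finV by (simp add: N_def card_Diff_subset)
    have N3: "N \<ge> 3"
    proof -
      have "card {u, x, y, v} = 4" using dis by simp
      moreover have "card {u, x, y, v} \<le> card V" using uV vV xV yV finV by (intro card_mono) auto
      ultimately show ?thesis using False by (simp add: N_def)
    qed
    let ?S' = "?S - {x, y}"
    have cS': "card ?S' = N - 2"
    proof -
      have "{x, y} \<subseteq> ?S" using xV yV dis by auto
      then have "card ?S' = card ?S - card {x, y}" using finV by (intro card_Diff_subset) auto
      then show ?thesis using cS dis by simp
    qed
    obtain g where g: "bij_betw g ?S' {0..<N - 2}"
      using ex_bij_betw_finite_nat[of ?S'] finV cS' by auto
    define f where "f p = (if p = x then 0 else if p = y then 1 else g p + 2)" for p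
    have fS: "p \<in> ?S \<Longrightarrow> f p < N" for p
    proof -
      assume p: "p \<in> ?S"
      show ?thesis
      proof (cases "p = x \<or> p = y")
        case True then show ?thesis using N3 by (auto simp: f_def)
      next
        case False
        then have "p \<in> ?S'" using p by auto
        then have "g p < N - 2" using g by (auto simp: bij_betw_def)
        then show ?thesis using False by (simp add: f_def)
      qed
    qed
    have finj: "p \<in> ?S \<Longrightarrow> q \<in> ?S \<Longrightarrow> f p = f q \<Longrightarrow> p = q" for p q
    proof -
      assume pq: "p \<in> ?S" "q \<in> ?S" "f p = f q"
      have ginj: "inj_on g ?S'" using g by (simp add: bij_betw_def)
      have gg: "p \<in> ?S' \<Longrightarrow> q \<in> ?S' \<Longrightarrow> g p = g q \<Longrightarrow> p = q"
        using ginj by (rule inj_onD)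
      show "p = q"
        using pq dis gg
        by (cases "p = x"; cases "p = y"; cases "q = x"; cases "q = y") (simp_all add: f_def)
    qed
    have fx: "f x = 0" and fy: "f y = 1" using dis by (auto simp: f_def)
    define c' where "c' e = (if e = {u, x} then 0 else if e = {y, v} then 2 mod N else (\<Sum>p\<in>e. f p) mod N)" for e
    have cux: "c' {u, x} = 0" "c' {x, u} = 0" by (auto simp: c'_def insert_commute)
    have cyv: "c' {y, v} = 2" "c' {v, y} = 2" using N3 dis by (auto simp: c'_def insert_commute doubleton_eq_iff)
    have cS2: "p \<in> ?S \<Longrightarrow> q \<in> ?S \<Longrightarrow> p \<noteq> q \<Longrightarrow> c' {p, q} = (f p + f q) mod N" for p q
      unfolding c'_def by (auto simp: doubleton_eq_iff)
    have ux: "{u, x} \<in> E" "{x, u} \<in> E" and yv: "{y, v} \<in> E" "{v, y} \<in> E" 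
      using echar uV xV vV yV dis by auto
    have prp: "proper_edge_colouring E c'"
    proof (rule proper_local)
      fix w q s assume h: "{w, q} \<in> E" "{w, s} \<in> E" "q \<noteq> s"
      have wV: "w \<in> V" "q \<in> V" "s \<in> V" and wq: "w \<noteq> q" and ws: "w \<noteq> s"
        using h edge_in by auto
      have eqq: "w \<in> ?S \<and> q \<in> ?S \<or> (w = u \<and> q = x) \<or> (w = x \<and> q = u) \<or> (w = v \<and> q = y) \<or> (w = y \<and> q = v)"
        using echar[OF wV(1,2)] h(1) by simp
      have eqs: "w \<in> ?S \<and> s \<in> ?S \<or> (w = u \<and> s = x) \<or> (w = x \<and> s = u) \<or> (w = v \<and> s = y) \<or> (w = y \<and> s = v)"
        using echar[OF wV(1,3)] h(2) by simp
      have dd: "u \<noteq> x" "u \<noteq> y" "u \<noteq> v" "x \<noteq> y" "x \<noteq> v" "y \<noteq> v" using dis by auto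
      show "c' {w, q} \<noteq> c' {w, s}"
      proof (cases "w \<in> ?S")
        case False
        then have "w = u \<and> q = x \<or> w = v \<and> q = y" "w = u \<and> s = x \<or> w = v \<and> s = y"
          using eqq eqs wV(1) dd by auto
        then show ?thesis using h(3) dd by auto
      next
        case wS: True
        have fw: "f w < N" using fS wS by simp
        have q3: "q \<in> ?S \<or> (q = u \<and> w = x) \<or> (q = v \<and> w = y)" using eqq wS by blast
        have s3: "s \<in> ?S \<or> (s = u \<and> w = x) \<or> (s = v \<and> w = y)" using eqs wS by blast
        consider "q \<in> ?S" "s \<in> ?S" | "q = u" "w = x" "s \<in> ?S" | "q = v" "w = y" "s \<in> ?S"
          | "s = u" "w = x" "q \<in> ?S" | "s = v" "w = y" "q \<in> ?S"
          using q3 s3 h(3) dd by blast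
        then show ?thesis
        proof cases
          case 1
          have "f q \<noteq> f s" using finj[of q s] 1 h(3) by blast
          then have "(f w + f q) mod N \<noteq> (f w + f s) mod N"
            using mod_cancel_aux[of "f q" N "f s" "f w"] fS 1 by blast
          then show ?thesis using cS2[OF wS 1(1) wq] cS2[OF wS 1(2) ws] by simp
        next
          case 2
          then have "s \<noteq> x" using ws by simp
          then have "f s \<noteq> 0" using finj[of s x] fx 2 xV dd by auto
          moreover have "f s < N" using fS 2 by simp
          ultimately have "c' {x, s} \<noteq> 0" using cS2[of x s] fx 2 xV dd \<open>s \<noteq> x\<close> by simp
          then show ?thesis using 2 cux by simp
        next
          case 3
          then have "s \<noteq> y" using ws by simp
          then have "f s \<noteq> 1" using finj[of s y] fy 3 yV dd by auto
          moreover have "f s < N" using fS 3 by simp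
          ultimately have "(1 + f s) mod N \<noteq> 2"
            using N3 by (rule mod_aux2)
          then have "c' {y, s} \<noteq> 2" using cS2[of y s] fy 3 yV dd \<open>s \<noteq> y\<close> by simp
          then show ?thesis using 3 cyv by simp
        next
          case 4
          then have "q \<noteq> x" using wq by simp
          then have "f q \<noteq> 0" using finj[of q x] fx 4 xV dd by auto
          moreover have "f q < N" using fS 4 by simp
          ultimately have "c' {x, q} \<noteq> 0" using cS2[of x q] fx 4 xV dd \<open>q \<noteq> x\<close> by simp
          then show ?thesis using 4 cux by simp
        next
          case 5
          then have "q \<noteq> y" using wq by simp
          then have "f q \<noteq> 1" using finj[of q y] fy 5 yV dd by auto
          moreover have "f q < N" using fS 5 by simp
          ultimately have "(1 + f q) mod N \<noteq> 2"
            using N3 by (rule mod_aux2)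
          then have "c' {y, q} \<noteq> 2" using cS2[of y q] fy 5 yV dd \<open>q \<noteq> y\<close> by simp
          then show ?thesis using 5 cyv by simp
        qed
      qed
    qed
    interpret X: dgc V E c' by unfold_locales (rule prp)
    have colk: "c' e < N" if "e \<in> E" for e
      using N3 unfolding c'_def by (auto intro: mod_less_divisor)
    have rc: "rainbow_connected V E c'"
    proof (rule rc_sym)
      fix p q assume pq: "p \<in> V" "q \<in> V" "p \<noteq> q"
      have path_uv: "rainbow_path V E c' [u, x, y, v]"
      proof (rule X.rp4)
        show "{u, x} \<in> E" "{y, v} \<in> E" by (fact ux(1), fact yv(1))
        show "{x, y} \<in> E" using Sfull xV yV dis by auto
        show "distinct [u, x, y, v]" by (fact dis)
        show "c' {u, x} \<noteq> c' {y, v}" using cux cyv by simp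
      qed
      have from_u: "r \<in> ?S \<Longrightarrow> r \<noteq> x \<Longrightarrow> rainbow_path V E c' [u, x, r]" for r
        using X.rp3[of u x r] ux Sfull[of x r] xV dis by auto
      have from_v: "r \<in> ?S \<Longrightarrow> r \<noteq> y \<Longrightarrow> rainbow_path V E c' [v, y, r]" for r
        using X.rp3[of v y r] yv Sfull[of y r] yV dis by auto
      have inS: "p \<in> ?S \<Longrightarrow> q \<in> ?S \<Longrightarrow> rainbow_path V E c' [p, q]"
        using X.rp2 Sfull pq by auto
      consider "p \<in> ?S" "q \<in> ?S" | "p = u" "q = v" | "p = v" "q = u" | "p = u" "q \<in> ?S"
        | "q = u" "p \<in> ?S" | "p = v" "q \<in> ?S" | "q = v" "p \<in> ?S"
        using pq by auto
      then show "(\<exists>xs. rainbow_path V E c' xs \<and> hd xs = p \<and> last xs = q) \<or>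
                 (\<exists>xs. rainbow_path V E c' xs \<and> hd xs = q \<and> last xs = p)"
      proof cases
        case 1 then show ?thesis using inS by force
      next
        case 2 then show ?thesis using path_uv by force
      next
        case 3 then show ?thesis using path_uv by force
      next
        case 4 then show ?thesis
          using from_u[of q] X.rp2[of u x] ux by (cases "q = x") force+
      next
        case 5 then show ?thesis
          using from_u[of p] X.rp2[of u x] ux by (cases "p = x") force+
      next
        case 6 then show ?thesis
          using from_v[of q] X.rp2[of v y] yv by (cases "q = y") force+
      next
        case 7 then show ?thesis
          using from_v[of p] X.rp2[of v y] yv by (cases "p = y") force+
      qed
    qed
    have "good V E c' N" by (rule good_intro[OF prp colk rc])
    moreover have "N \<le> card (nb V E x)"
    proof -
      have "insert u (?S - {x}) \<subseteq> nb V E x"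
        using echar xV uV dis unfolding nb_def by auto
      moreover have "card (insert u (?S - {x})) = N"
      proof -
        have "x \<in> ?S" using xV dis by auto
        then have "card (?S - {x}) = N - 1" using cS finV by (simp add: card_Diff_singleton)
        then show ?thesis using N3 finV by simp
      qed
      moreover have "finite (nb V E x)" using finV by (simp add: nb_def)
      ultimately show ?thesis by (metis card_mono)
    qed
    ultimately show ?thesis using xV unfolding goal_def by blast
  qed
qed

end

lemma sg_edge_in: "simple_graph V E \<Longrightarrow> {x, y} \<in> E \<Longrightarrow> x \<in> V \<and> y \<in> V \<and> x \<noteq> y"
  unfolding simple_graph_def
  by (metis doubleton_eq_iff insert_absorb2 insert_iff singletonD)

lemma gen_rp2: "simple_graph V E \<Longrightarrow> {a, b} \<in> E \<Longrightarrow> rainbow_path V E c [a, b]"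
  using sg_edge_in[of V E a b] by (simp add: path_simps)

lemma gen_rp3: "simple_graph V E \<Longrightarrow> proper_edge_colouring E c \<Longrightarrow> {a, b} \<in> E \<Longrightarrow> {b, d} \<in> E \<Longrightarrow> a \<noteq> d \<Longrightarrow>
   rainbow_path V E c [a, b, d]"
  using sg_edge_in[of V E a b] sg_edge_in[of V E b d]
  unfolding proper_edge_colouring_def
  by (simp add: path_simps) (metis doubleton_eq_iff insert_disjoint(1) insert_iff)

lemma sg_list: "finite V \<Longrightarrow> list_all (\<lambda>(a, b). a \<in> V \<and> b \<in> V \<and> a \<noteq> b) L \<Longrightarrow>
  simple_graph V ((\<lambda>(a, b). {a, b}) ` set L)"
  unfolding simple_graph_def list_all_iff by fastforce

lemma rc_dist2:
  assumes sg: "simple_graph V E" and pr: "proper_edge_colouring E c"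
    and H: "\<forall>p\<in>V. \<forall>q\<in>V. p \<noteq> q \<longrightarrow> {p, q} \<in> E \<or> (\<exists>w\<in>V. {p, w} \<in> E \<and> {w, q} \<in> E) \<or> (p, q) \<in> F \<or> (q, p) \<in> F"
    and Fp: "\<And>p q. (p, q) \<in> F \<Longrightarrow> \<exists>xs. rainbow_path V E c xs \<and> hd xs = p \<and> last xs = q"
  shows "rainbow_connected V E c"
proof (rule rc_sym)
  fix p q assume pq: "p \<in> V" "q \<in> V" "p \<noteq> q"
  from H pq have "{p, q} \<in> E \<or> (\<exists>w\<in>V. {p, w} \<in> E \<and> {w, q} \<in> E) \<or> (p, q) \<in> F \<or> (q, p) \<in> F" by blast
  then show "(\<exists>xs. rainbow_path V E c xs \<and> hd xs = p \<and> last xs = q) \<or>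
             (\<exists>xs. rainbow_path V E c xs \<and> hd xs = q \<and> last xs = p)"
  proof (elim disjE)
    assume "{p, q} \<in> E" then show ?thesis using gen_rp2[OF sg] by force
  next
    assume "\<exists>w\<in>V. {p, w} \<in> E \<and> {w, q} \<in> E"
    then obtain w where "{p, w} \<in> E" "{w, q} \<in> E" by blast
    then show ?thesis using gen_rp3[OF sg pr, of p w q] pq by force
  qed (use Fp in blast)+
qed

definition H6_V :: "nat set" where "H6_V = {0,1,2,3,4,5}"
definition H6_E :: "nat set set" where
  "H6_E = {{0,1},{2,4},{3,4},{1,2},{1,5},{2,3},{2,5},{3,5}}"
definition H6_c :: "nat set \<Rightarrow> nat" where
  "H6_c e = (if e = {0,1} then 0 else if e = {2,4} then 0 else if e = {3,4} then 1 else if e = {1,2} then 2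
    else if e = {1,5} then 3 else if e = {2,3} then 3 else if e = {2,5} then 1 else 0)"

lemma H6_sg: "simple_graph H6_V H6_E"
proof -
  have eq: "H6_E = (\<lambda>(a, b). {a, b}) ` set [(0,1),(2,4),(3,4),(1,2),(1,5),(2,3),(2,5),(3,5)]"
    by (simp add: H6_E_def)
  show ?thesis unfolding eq by (rule sg_list) (simp_all add: H6_V_def)
qed

lemma H6_proper: "proper_edge_colouring H6_E H6_c"
  unfolding proper_edge_colouring_def H6_E_def
  by (simp add: H6_c_def doubleton_eq_iff)

lemma H6_good: "good H6_V H6_E H6_c 4"
  unfolding good_def
proof (intro conjI)
  show "proper_edge_colouring H6_E H6_c" by (rule H6_proper)
  show "H6_c ` H6_E \<subseteq> {..<4}" unfolding H6_E_def H6_c_def by (simp add: doubleton_eq_iff)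
  show "rainbow_connected H6_V H6_E H6_c"
  proof (rule rc_dist2[OF H6_sg H6_proper, of "{(0, 4), (0, 3)}"])
    show "\<forall>p\<in>H6_V. \<forall>q\<in>H6_V. p \<noteq> q \<longrightarrow> {p, q} \<in> H6_E \<or> (\<exists>w\<in>H6_V. {p, w} \<in> H6_E \<and> {w, q} \<in> H6_E) \<or>
        (p, q) \<in> {(0, 4), (0, 3)} \<or> (q, p) \<in> {(0, 4), (0, 3)}"
      unfolding H6_V_def H6_E_def by (simp add: doubleton_eq_iff)
    fix p q assume "(p, q) \<in> {(0::nat, 4::nat), (0, 3)}"
    then consider "p = 0" "q = 4" | "p = 0" "q = 3" by blast
    then show "\<exists>xs. rainbow_path H6_V H6_E H6_c xs \<and> hd xs = p \<and> last xs = q"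
    proof cases
      case 1 then show ?thesis
      by (intro exI[of _ "[0, 1, 2, 3, 4]"])
        (simp add: path_simps H6_V_def H6_E_def H6_c_def doubleton_eq_iff)
    next
      case 2 then show ?thesis
      by (intro exI[of _ "[0, 1, 2, 3]"])
        (simp add: path_simps H6_V_def H6_E_def H6_c_def doubleton_eq_iff)
    qed
  qed
qed


definition H7_V :: "nat set" where "H7_V = {0,1,2,3,4,5,6}"
definition H7_E :: "nat set set" where
  "H7_E = {{0,1},{0,2},{3,5},{4,5},{1,2},{1,3},{1,6},{2,4},{2,6},{3,4},{3,6},{4,6}}"
definition H7_c :: "nat set \<Rightarrow> nat" where
  "H7_c e = (if e = {0,1} then 0 else if e = {0,2} then 1 else if e = {3,5} then 2 else if e = {4,5} then 3 else if e = {1,2} then 2 else if e = {1,3} then 3 else if e = {1,6} then 1 else if e = {2,4} then 0 else if e = {2,6} then 3 else if e = {3,4} then 1 else if e = {3,6} then 0 else 2)"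

lemma H7_sg: "simple_graph H7_V H7_E"
proof -
  have eq: "H7_E = (\<lambda>(a, b). {a, b}) ` set [(0,1),(0,2),(3,5),(4,5),(1,2),(1,3),(1,6),(2,4),(2,6),(3,4),(3,6),(4,6)]"
    by (simp add: H7_E_def)
  show ?thesis unfolding eq by (rule sg_list) (simp_all add: H7_V_def)
qed

lemma H7_proper: "proper_edge_colouring H7_E H7_c"
  unfolding proper_edge_colouring_def H7_E_def
  by (simp add: H7_c_def doubleton_eq_iff)

lemma H7_good: "good H7_V H7_E H7_c 4"
  unfolding good_def
proof (intro conjI)
  show "proper_edge_colouring H7_E H7_c" by (rule H7_proper)
  show "H7_c ` H7_E \<subseteq> {..<4}" unfolding H7_E_def H7_c_def by (simp add: doubleton_eq_iff)
  show "rainbow_connected H7_V H7_E H7_c"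
  proof (rule rc_dist2[OF H7_sg H7_proper, of "{(0, 5)}"])
    show "\<forall>p\<in>H7_V. \<forall>q\<in>H7_V. p \<noteq> q \<longrightarrow> {p, q} \<in> H7_E \<or> (\<exists>w\<in>H7_V. {p, w} \<in> H7_E \<and> {w, q} \<in> H7_E) \<or>
        (p, q) \<in> {(0, 5)} \<or> (q, p) \<in> {(0, 5)}"
      unfolding H7_V_def H7_E_def by (simp add: doubleton_eq_iff)
    fix p q assume "(p, q) \<in> {(0::nat, 5::nat)}"
    then consider "p = 0" "q = 5" by blast
    then show "\<exists>xs. rainbow_path H7_V H7_E H7_c xs \<and> hd xs = p \<and> last xs = q"
    proof cases
      case 1 then show ?thesis
      by (intro exI[of _ "[0, 1, 3, 5]"])
        (simp add: path_simps H7_V_def H7_E_def H7_c_def doubleton_eq_iff)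
    qed
  qed
qed

definition H8_V :: "nat set" where "H8_V = {0,1,2,3,4,5,6,7}"
definition H8_E :: "nat set set" where
  "H8_E = {{0,1},{0,2},{3,5},{4,5},{1,2},{1,3},{1,6},{1,7},{2,4},{2,6},{2,7},{3,4},{3,6},{3,7},{4,6},{4,7},{6,7}}"
definition H8_c :: "nat set \<Rightarrow> nat" where
  "H8_c e = (if e = {0,1} then 0 else if e = {0,2} then 1 else if e = {3,5} then 0 else if e = {4,5} then 1 else if e = {1,2} then 2 else if e = {1,3} then 1 else if e = {1,6} then 3 else if e = {1,7} then 4 else if e = {2,4} then 3 else if e = {2,6} then 4 else if e = {2,7} then 0 else if e = {3,4} then 4 else if e = {3,6} then 2 else if e = {3,7} then 3 else if e = {4,6} then 0 else if e = {4,7} then 2 else 1)"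

lemma H8_sg: "simple_graph H8_V H8_E"
proof -
  have eq: "H8_E = (\<lambda>(a, b). {a, b}) ` set [(0,1),(0,2),(3,5),(4,5),(1,2),(1,3),(1,6),(1,7),(2,4),(2,6),(2,7),(3,4),(3,6),(3,7),(4,6),(4,7),(6,7)]"
    by (simp add: H8_E_def)
  show ?thesis unfolding eq by (rule sg_list) (simp_all add: H8_V_def)
qed

lemma H8_proper: "proper_edge_colouring H8_E H8_c"
  unfolding proper_edge_colouring_def H8_E_def
  by (simp add: H8_c_def doubleton_eq_iff)

lemma H8_good: "good H8_V H8_E H8_c 5"
  unfolding good_def
proof (intro conjI)
  show "proper_edge_colouring H8_E H8_c" by (rule H8_proper)
  show "H8_c ` H8_E \<subseteq> {..<5}" unfolding H8_E_def H8_c_def by (simp add: doubleton_eq_iff)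
  show "rainbow_connected H8_V H8_E H8_c"
  proof (rule rc_dist2[OF H8_sg H8_proper, of "{(0, 5)}"])
    show "\<forall>p\<in>H8_V. \<forall>q\<in>H8_V. p \<noteq> q \<longrightarrow> {p, q} \<in> H8_E \<or> (\<exists>w\<in>H8_V. {p, w} \<in> H8_E \<and> {w, q} \<in> H8_E) \<or>
        (p, q) \<in> {(0, 5)} \<or> (q, p) \<in> {(0, 5)}"
      unfolding H8_V_def H8_E_def by (simp add: doubleton_eq_iff)
    fix p q assume "(p, q) \<in> {(0::nat, 5::nat)}"
    then consider "p = 0" "q = 5" by blast
    then show "\<exists>xs. rainbow_path H8_V H8_E H8_c xs \<and> hd xs = p \<and> last xs = q"
    proof cases
      case 1 then show ?thesis
      by (intro exI[of _ "[0, 1, 2, 4, 5]"])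
        (simp add: path_simps H8_V_def H8_E_def H8_c_def doubleton_eq_iff)
    qed
  qed
qed

context dg begin

lemma echar_gen:
  assumes "p \<in> V" "q \<in> V"
  shows "{p, q} \<in> E \<longleftrightarrow> (if p = u then q \<in> nb V E u else if q = u then p \<in> nb V E u
     else if p = v then q \<in> nb V E v else if q = v then p \<in> nb V E v else {p, q} \<in> E)"
  using assms by (auto simp: nb_def insert_commute)

lemma goal_transfer:
  assumes "bij_betw f V V'" "\<forall>p\<in>V. \<forall>q\<in>V. {p, q} \<in> E \<longleftrightarrow> {f p, f q} \<in> E'"
    "good V' E' c' k" "z \<in> V" "k \<le> card (nb V E z)"
  shows "goal V E"
  using good_transfer[OF assms(1,2) sg assms(3)] assms(4,5) unfolding goal_def by blast

lemma F2:
  assumes uV: "u \<in> V" and vV: "v \<in> V" and xV: "x \<in> V" and y0V: "y0 \<in> V" and y1V: "y1 \<in> V"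
    and dis: "distinct [u, x, y0, y1, v]"
    and Au: "nb V E u = {x}" and Av: "nb V E v = {y0, y1}"
    and Sch: "\<And>p q. p \<in> V - {u, v} \<Longrightarrow> q \<in> V - {u, v} \<Longrightarrow> p \<noteq> q \<Longrightarrow> ({p, q} \<in> E \<longleftrightarrow> {p, q} \<noteq> {x, y1})"
    and C: "card V \<le> 6"
  shows "goal V E"
proof -
  have dd: "u \<noteq> x" "u \<noteq> y0" "u \<noteq> y1" "u \<noteq> v" "x \<noteq> y0" "x \<noteq> y1" "x \<noteq> v" "y0 \<noteq> y1" "y0 \<noteq> v" "y1 \<noteq> v"
    "x \<noteq> u" "y0 \<noteq> u" "y1 \<noteq> u" "v \<noteq> u" "y0 \<noteq> x" "y1 \<noteq> x" "v \<noteq> x" "y1 \<noteq> y0" "v \<noteq> y0" "v \<noteq> y1"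
    using dis by auto
  have ech: "{p, q} \<in> E \<longleftrightarrow> p \<noteq> q \<and> (if p = u then q = x else if q = u then p = x
     else if p = v then q = y0 \<or> q = y1 else if q = v then p = y0 \<or> p = y1 else {p, q} \<noteq> {x, y1})"
    if "p \<in> V" "q \<in> V" for p q
  proof (cases "p = q")
    case True then show ?thesis using no_loop[of p] by simp
  next
    case False
    have n1: "{u, z} \<in> E \<longleftrightarrow> z = x" "{z, u} \<in> E \<longleftrightarrow> z = x"
      "{v, z} \<in> E \<longleftrightarrow> z \<in> {y0, y1}" "{z, v} \<in> E \<longleftrightarrow> z \<in> {y0, y1}" if "z \<in> V" for z
      using that Au Av unfolding nb_def by (auto simp: insert_commute)
    consider "p = u" | "p \<noteq> u" "q = u" | "p \<noteq> u" "q \<noteq> u" "p = v" | "p \<noteq> u" "q \<noteq> u" "p \<noteq> v" "q = v"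
      | "p \<noteq> u" "q \<noteq> u" "p \<noteq> v" "q \<noteq> v" by blast
    then show ?thesis
    proof cases
      case 1 then show ?thesis using n1(1)[OF that(2)] False dd by auto
    next
      case 2 then show ?thesis using n1(2)[OF that(1)] False dd by auto
    next
      case 3 then show ?thesis using n1(3)[OF that(2)] False dd by auto
    next
      case 4 then show ?thesis using n1(4)[OF that(1)] False dd by auto
    next
      case 5
      then have "p \<in> V - {u, v}" "q \<in> V - {u, v}" using that by auto
      from Sch[OF this False] show ?thesis using 5 False by simp
    qed
  qed
  let ?K = "{u, x, y0, y1, v}"
  have Ksub: "?K \<subseteq> V" using uV vV xV y0V y1V by auto
  have cK: "card ?K = 5" using dd by simp
  have cVK: "card (V - ?K) = card V - 5" using card_Diff_subset[OF _ Ksub] cK by simp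
  have "card V \<ge> 5" using card_mono[OF finV Ksub] cK by simp
  then consider "card V = 5" | "card V = 6" using C by linarith
  then show ?thesis
  proof cases
    case 1
    then have Veq: "V = ?K" using card_subset_eq[OF finV Ksub] cK by simp
    define f where "f z = (if z = u then 4 else if z = x then 3 else if z = y0 then 0 else if z = y1 then 1 else (2::nat))" for z
    have "bij_betw f V Z2_V"
      unfolding bij_betw_def Veq Z2_V_def by (simp add: f_def dd inj_on_def insert_commute)
    moreover have "\<forall>p\<in>V. \<forall>q\<in>V. {p, q} \<in> E \<longleftrightarrow> {f p, f q} \<in> Z2_E"
      unfolding Veq by (simp add: no_loop ech uV vV xV y0V y1V f_def Z2_E_def dd doubleton_eq_iff)
    ultimately have "graph_iso V E Z2_V Z2_E" unfolding graph_iso_def by blast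
    then show ?thesis by (simp add: goal_def)
  next
    case 2
    then have "card (V - ?K) = 1" using cVK by simp
    then obtain w where w: "V - ?K = {w}" by (rule card_1_singletonE)
    then have wV: "w \<in> V" and wd: "w \<noteq> u" "w \<noteq> x" "w \<noteq> y0" "w \<noteq> y1" "w \<noteq> v" by auto
    have wd': "u \<noteq> w" "x \<noteq> w" "y0 \<noteq> w" "y1 \<noteq> w" "v \<noteq> w" using wd by auto
    have Veq: "V = insert w ?K" using w Ksub by auto
    define f where "f z = (if z = u then 0 else if z = x then 1 else if z = y0 then 2 else if z = y1 then 3
      else if z = v then 4 else (5::nat))" for z
    have bij: "bij_betw f V H6_V"
      unfolding bij_betw_def Veq H6_V_def by (simp add: f_def dd wd wd' inj_on_def insert_commute)
    have corr: "\<forall>p\<in>V. \<forall>q\<in>V. {p, q} \<in> E \<longleftrightarrow> {f p, f q} \<in> H6_E"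
      unfolding Veq by (simp add: no_loop ech uV vV xV y0V y1V wV f_def H6_E_def dd wd wd' doubleton_eq_iff)
    have "4 \<le> card (nb V E y0)"
    proof -
      have "{x, y1, v, w} \<subseteq> nb V E y0"
        using ech xV y1V vV wV y0V dd wd wd' unfolding nb_def by (auto simp: doubleton_eq_iff)
      moreover have "card {x, y1, v, w} = 4" using dd wd wd' by simp
      moreover have "finite (nb V E y0)" using finV by (simp add: nb_def)
      ultimately show ?thesis by (metis card_mono)
    qed
    then show ?thesis using goal_transfer[OF bij corr H6_good y0V] by simp
  qed
qed

lemma F3:
  assumes uV: "u \<in> V" and vV: "v \<in> V" and x0V: "x0 \<in> V" and x1V: "x1 \<in> V" and y0V: "y0 \<in> V" and y1V: "y1 \<in> V"
    and dis: "distinct [u, x0, x1, y0, y1, v]"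
    and Au: "nb V E u = {x0, x1}" and Av: "nb V E v = {y0, y1}"
    and Sch: "\<And>p q. p \<in> V - {u, v} \<Longrightarrow> q \<in> V - {u, v} \<Longrightarrow> p \<noteq> q \<Longrightarrow>
       ({p, q} \<in> E \<longleftrightarrow> {p, q} \<noteq> {x0, y1} \<and> {p, q} \<noteq> {x1, y0})"
    and C: "card V \<le> 8"
  shows "goal V E"
proof -
  have dd: "u \<noteq> x0" "u \<noteq> x1" "u \<noteq> y0" "u \<noteq> y1" "u \<noteq> v" "x0 \<noteq> x1" "x0 \<noteq> y0" "x0 \<noteq> y1" "x0 \<noteq> v"
    "x1 \<noteq> y0" "x1 \<noteq> y1" "x1 \<noteq> v" "y0 \<noteq> y1" "y0 \<noteq> v" "y1 \<noteq> v"
    "x0 \<noteq> u" "x1 \<noteq> u" "y0 \<noteq> u" "y1 \<noteq> u" "v \<noteq> u" "x1 \<noteq> x0" "y0 \<noteq> x0" "y1 \<noteq> x0" "v \<noteq> x0"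
    "y0 \<noteq> x1" "y1 \<noteq> x1" "v \<noteq> x1" "y1 \<noteq> y0" "v \<noteq> y0" "v \<noteq> y1"
    using dis by auto
  have ech: "{p, q} \<in> E \<longleftrightarrow> p \<noteq> q \<and> (if p = u then q = x0 \<or> q = x1 else if q = u then p = x0 \<or> p = x1
     else if p = v then q = y0 \<or> q = y1 else if q = v then p = y0 \<or> p = y1
     else {p, q} \<noteq> {x0, y1} \<and> {p, q} \<noteq> {x1, y0})"
    if "p \<in> V" "q \<in> V" for p q
  proof (cases "p = q")
    case True then show ?thesis using no_loop[of p] by simp
  next
    case False
    have n1: "{u, z} \<in> E \<longleftrightarrow> z \<in> {x0, x1}" "{z, u} \<in> E \<longleftrightarrow> z \<in> {x0, x1}"
      "{v, z} \<in> E \<longleftrightarrow> z \<in> {y0, y1}" "{z, v} \<in> E \<longleftrightarrow> z \<in> {y0, y1}" if "z \<in> V" for z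
      using that Au Av unfolding nb_def by (auto simp: insert_commute)
    consider "p = u" | "p \<noteq> u" "q = u" | "p \<noteq> u" "q \<noteq> u" "p = v" | "p \<noteq> u" "q \<noteq> u" "p \<noteq> v" "q = v"
      | "p \<noteq> u" "q \<noteq> u" "p \<noteq> v" "q \<noteq> v" by blast
    then show ?thesis
    proof cases
      case 1 then show ?thesis using n1(1)[OF that(2)] False dd by auto
    next
      case 2 then show ?thesis using n1(2)[OF that(1)] False dd by auto
    next
      case 3 then show ?thesis using n1(3)[OF that(2)] False dd by auto
    next
      case 4 then show ?thesis using n1(4)[OF that(1)] False dd by auto
    next
      case 5
      then have "p \<in> V - {u, v}" "q \<in> V - {u, v}" using that by auto
      from Sch[OF this False] show ?thesis using 5 False by simp
    qed
  qed
  have finnb: "finite (nb V E z)" for z using finV by (simp add: nb_def)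
  let ?K = "{u, x0, x1, y0, y1, v}"
  have Ksub: "?K \<subseteq> V" using uV vV x0V x1V y0V y1V by auto
  have cK: "card ?K = 6" using dd by simp
  have cVK: "card (V - ?K) = card V - 6" using card_Diff_subset[OF _ Ksub] cK by simp
  have "card V \<ge> 6" using card_mono[OF finV Ksub] cK by simp
  then consider "card V = 6" | "card V = 7" | "card V = 8" using C by linarith
  then show ?thesis
  proof cases
    case 1
    then have Veq: "V = ?K" using card_subset_eq[OF finV Ksub] cK by simp
    define f where "f z = (if z = u then 3 else if z = x0 then 0 else if z = x1 then 2 else if z = y0 then 1
       else if z = y1 then 5 else (4::nat))" for z
    have "bij_betw f V G63_V"
      unfolding bij_betw_def Veq G63_V_def by (simp add: f_def dd inj_on_def insert_commute)
    moreover have "\<forall>p\<in>V. \<forall>q\<in>V. {p, q} \<in> E \<longleftrightarrow> {f p, f q} \<in> G63_E"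
      unfolding Veq by (simp add: no_loop ech uV vV x0V x1V y0V y1V f_def G63_E_def dd doubleton_eq_iff)
    ultimately have "graph_iso V E G63_V G63_E" unfolding graph_iso_def by blast
    then show ?thesis by (simp add: goal_def)
  next
    case 2
    then have "card (V - ?K) = 1" using cVK by simp
    then obtain w where w: "V - ?K = {w}" by (rule card_1_singletonE)
    then have wV: "w \<in> V" and wd: "w \<noteq> u" "w \<noteq> x0" "w \<noteq> x1" "w \<noteq> y0" "w \<noteq> y1" "w \<noteq> v" by auto
    have wd': "u \<noteq> w" "x0 \<noteq> w" "x1 \<noteq> w" "y0 \<noteq> w" "y1 \<noteq> w" "v \<noteq> w" using wd by auto
    have Veq: "V = insert w ?K" using w Ksub by auto
    define f where "f z = (if z = u then 0 else if z = x0 then 1 else if z = x1 then 2 else if z = y0 then 3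
      else if z = y1 then 4 else if z = v then 5 else (6::nat))" for z
    have bij: "bij_betw f V H7_V"
      unfolding bij_betw_def Veq H7_V_def by (simp add: f_def dd wd wd' inj_on_def insert_commute)
    have corr: "\<forall>p\<in>V. \<forall>q\<in>V. {p, q} \<in> E \<longleftrightarrow> {f p, f q} \<in> H7_E"
      unfolding Veq by (simp add: no_loop ech uV vV x0V x1V y0V y1V wV f_def H7_E_def dd wd wd' doubleton_eq_iff)
    have "4 \<le> card (nb V E x0)"
    proof -
      have "{u, x1, y0, w} \<subseteq> nb V E x0"
        using ech uV x1V y0V wV x0V dd wd wd' unfolding nb_def by (auto simp: doubleton_eq_iff)
      moreover have "card {u, x1, y0, w} = 4" using dd wd wd' by simp
      ultimately show ?thesis using finnb by (metis card_mono)
    qed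
    then show ?thesis using goal_transfer[OF bij corr H7_good x0V] by simp
  next
    case 3
    then have "card (V - ?K) = 2" using cVK by simp
    then obtain w1 w2 where w: "V - ?K = {w1, w2}" and w12: "w1 \<noteq> w2" using card_2_iff[of "V - ?K"] by blast
    then have wV: "w1 \<in> V" "w2 \<in> V" and wd: "w1 \<noteq> u" "w1 \<noteq> x0" "w1 \<noteq> x1" "w1 \<noteq> y0" "w1 \<noteq> y1" "w1 \<noteq> v"
      "w2 \<noteq> u" "w2 \<noteq> x0" "w2 \<noteq> x1" "w2 \<noteq> y0" "w2 \<noteq> y1" "w2 \<noteq> v" by auto
    have wd': "u \<noteq> w1" "x0 \<noteq> w1" "x1 \<noteq> w1" "y0 \<noteq> w1" "y1 \<noteq> w1" "v \<noteq> w1"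
      "u \<noteq> w2" "x0 \<noteq> w2" "x1 \<noteq> w2" "y0 \<noteq> w2" "y1 \<noteq> w2" "v \<noteq> w2" "w2 \<noteq> w1" using wd w12 by auto
    have Veq: "V = insert w1 (insert w2 ?K)" using w Ksub by auto
    define f where "f z = (if z = u then 0 else if z = x0 then 1 else if z = x1 then 2 else if z = y0 then 3
      else if z = y1 then 4 else if z = v then 5 else if z = w1 then 6 else (7::nat))" for z
    have bij: "bij_betw f V H8_V"
      unfolding bij_betw_def Veq H8_V_def by (simp add: f_def dd wd wd' w12 inj_on_def insert_commute)
    have corr: "\<forall>p\<in>V. \<forall>q\<in>V. {p, q} \<in> E \<longleftrightarrow> {f p, f q} \<in> H8_E"
      unfolding Veq by (simp add: no_loop ech uV vV x0V x1V y0V y1V wV f_def H8_E_def dd wd wd' w12 doubleton_eq_iff)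
    have "5 \<le> card (nb V E x0)"
    proof -
      have "{u, x1, y0, w1, w2} \<subseteq> nb V E x0"
        using ech uV x1V y0V wV x0V dd wd wd' unfolding nb_def by (auto simp: doubleton_eq_iff)
      moreover have "card {u, x1, y0, w1, w2} = 5" using dd wd wd' w12 by simp
      ultimately show ?thesis using finnb by (metis card_mono)
    qed
    then show ?thesis using goal_transfer[OF bij corr H8_good x0V] by simp
  qed
qed

end

lemma two_elems: "finite X \<Longrightarrow> 2 \<le> card X \<Longrightarrow> \<exists>a\<in>X. \<exists>b\<in>X. a \<noteq> b"
  using card_le_Suc0_iff_eq[of X] by auto

lemma three_elems: "finite X \<Longrightarrow> 3 \<le> card X \<Longrightarrow> \<exists>a\<in>X. \<exists>b\<in>X. \<exists>d\<in>X. a \<noteq> b \<and> a \<noteq> d \<and> b \<noteq> d"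
proof -
  assume f: "finite X" and c: "3 \<le> card X"
  then obtain a where a: "a \<in> X" by fastforce
  then have "card (X - {a}) \<ge> 2" using f c by (simp add: card_Diff_singleton)
  then obtain b d where "b \<in> X - {a}" "d \<in> X - {a}" "b \<noteq> d" using two_elems[of "X - {a}"] f by blast
  then show ?thesis using a by blast
qed

context dgc begin

lemma case_a1:
  assumes b: "bad u v" and a1: "card (A u) = 1"
  shows "goal V E"
proof -
  note bb = bad_basic[OF b]
  obtain x where Ax: "A u = {x}" using a1 by (rule card_1_singletonE)
  have xA: "x \<in> A u" using Ax by simp
  have xS: "x \<in> V - {u, v}" using bb(4) Ax by auto
  have ex: "\<exists>y0\<in>A v. {x, y0} \<in> E"
  proof (rule ccontr)
    assume no: "\<not> ?thesis"
    then have "P u v = {x} \<times> A v" using Ax by (auto simp: P_def)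
    then have "card (P u v) = card (A v)" by (simp add: card_cartesian_product)
    then show False using cardP[OF b] a1 by simp
  qed
  then obtain y0 where y0A: "y0 \<in> A v" and xy0: "{x, y0} \<in> E" by blast
  have uniq: "y \<in> A v \<Longrightarrow> {x, y} \<in> E \<Longrightarrow> y = y0" for y
    using Q_inj1[OF b xA _ y0A _ xy0] by blast
  have Pe: "P u v = {x} \<times> (A v - {y0})" using Ax uniq xy0 by (auto simp: P_def)
  have cPe: "card (P u v) = card (A v) - 1"
    unfolding Pe using y0A finA by (simp add: card_cartesian_product card_Diff_singleton)
  have cAv: "card (A v) \<ge> 1" using y0A finA by (metis One_nat_def Suc_leI card_gt_0_iff empty_iff)
  have mx: "card (P u v) + 2 \<ge> card (A u) + card (A v)" using cPe a1 cAv by simp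
  have y0S: "y0 \<in> V - {u, v}" using bb(5) y0A by auto
  have xy0ne: "x \<noteq> y0" using bb(6) xA y0A by blast
  have Sedge: "p \<in> V - {u, v} \<Longrightarrow> q \<in> V - {u, v} \<Longrightarrow> p \<noteq> q \<Longrightarrow> {p, q} \<notin> E \<Longrightarrow>
      (p = x \<and> q \<in> A v - {y0}) \<or> (q = x \<and> p \<in> A v - {y0})" for p q
  proof -
    assume h: "p \<in> V - {u, v}" "q \<in> V - {u, v}" "p \<noteq> q" "{p, q} \<notin> E"
    obtain x' y' where "(x', y') \<in> P u v" "{p, q} = {x', y'}" using maximal[OF b mx h] by blast
    then show ?thesis using Pe by (auto simp: doubleton_eq_iff)
  qed
  have cux: "c {u, x} = c {y0, v}" by (rule bad_col[OF b xA y0A xy0])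
  have y0v: "{y0, v} \<in> E" using nbD'[OF y0A] .
  have ux: "{u, x} \<in> E" using nbD[OF xA] .
  have yy: "c {x, y0} = c {y, v}" if y: "y \<in> A v - {y0}" for y
  proof -
    have yS: "y \<in> V - {u, v}" using bb(5) y by auto
    have xy: "x \<noteq> y" using bb(6) xA y by blast
    have e: "{y0, y} \<in> E"
    proof (rule ccontr)
      assume "{y0, y} \<notin> E"
      then have "(y0 = x \<and> y \<in> A v - {y0}) \<or> (y = x \<and> y0 \<in> A v - {y0})"
        using Sedge[OF y0S yS] y by auto
      then show False using xy0ne xy by auto
    qed
    have yv: "{y, v} \<in> E" using nbD' y by auto
    have d: "distinct [u, x, y0, y, v]" using bb xA y0A y xy xy0ne by auto
    have "c {u, x} = c {y0, y} \<or> c {u, x} = c {y, v} \<or> c {x, y0} = c {y, v}"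
      by (rule bad5[OF b ux xy0 e yv d])
    moreover have "c {y0, v} \<noteq> c {y0, y}" using col_ne'[OF y0v e] y yS by auto
    moreover have "c {y0, v} \<noteq> c {v, y}" using col_ne[OF y0v] nbD y y by auto
    ultimately show ?thesis using cux by (auto simp: insert_commute)
  qed
  have b2: "card (A v) \<le> 2"
  proof (rule ccontr)
    assume "\<not> ?thesis"
    then have "card (A v - {y0}) \<ge> 2" using y0A finA by (simp add: card_Diff_singleton)
    then obtain y1 y2 where y12: "y1 \<in> A v - {y0}" "y2 \<in> A v - {y0}" "y1 \<noteq> y2"
      using two_elems[of "A v - {y0}"] finA by blast
    have "c {y1, v} = c {y2, v}" using yy[OF y12(1)] yy[OF y12(2)] by simp
    moreover have "c {y1, v} \<noteq> c {v, y2}" using col_ne[of y1 v y2] nbD'[of y1 v] nbD[of y2 v] y12 by auto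
    ultimately show False by (simp add: insert_commute)
  qed
  show ?thesis
  proof (cases "card (A v) = 1")
    case True
    then have Av: "A v = {y0}" using y0A finA by (metis card_1_singletonE singletonD)
    show ?thesis
    proof (rule F1[of u v x y0])
      show "u \<in> V" "v \<in> V" "x \<in> V" "y0 \<in> V" using bb xS y0S by auto
      show "distinct [u, x, y0, v]" using xS y0S xy0ne bb by auto
      show "nb V E u = {x}" "nb V E v = {y0}" using Ax Av by auto
      fix p q assume "p \<in> V - {u, v}" "q \<in> V - {u, v}" "p \<noteq> q"
      then show "{p, q} \<in> E" using Sedge Av by blast
    qed
  next
    case False
    then have c2: "card (A v) = 2" using b2 cAv by simp
    then have "card (A v - {y0}) = 1" using y0A finA by (simp add: card_Diff_singleton)
    then obtain y1 where y1: "A v - {y0} = {y1}" by (rule card_1_singletonE)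
    then have Av: "A v = {y0, y1}" and y1ne: "y1 \<noteq> y0" using y0A by auto
    have y1A: "y1 \<in> A v" using Av by simp
    have y1S: "y1 \<in> V - {u, v}" using bb(5) y1A by auto
    have xy1: "{x, y1} \<notin> E" using uniq[OF y1A] y1ne by blast
    have xy1ne: "x \<noteq> y1" using bb(6) xA y1A by blast
    have Sch: "p \<in> V - {u, v} \<Longrightarrow> q \<in> V - {u, v} \<Longrightarrow> p \<noteq> q \<Longrightarrow> ({p, q} \<in> E \<longleftrightarrow> {p, q} \<noteq> {x, y1})" for p q
    proof -
      assume h: "p \<in> V - {u, v}" "q \<in> V - {u, v}" "p \<noteq> q"
      show ?thesis
      proof
        assume "{p, q} \<in> E" then show "{p, q} \<noteq> {x, y1}" using xy1 by auto
      next
        assume ne: "{p, q} \<noteq> {x, y1}"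
        show "{p, q} \<in> E"
        proof (rule ccontr)
          assume "{p, q} \<notin> E"
          then have "(p = x \<and> q = y1) \<or> (q = x \<and> p = y1)" using Sedge[OF h] y1 by blast
          then show False using ne by (auto simp: insert_commute)
        qed
      qed
    qed
    have cxy: "c {x, y0} = c {y1, v}" using yy[of y1] y1 by simp
    let ?C = "V - {u, v, x, y0, y1}"
    have colw: "c {w, y1} = c {u, x}" if w: "w \<in> ?C" for w
    proof -
      have wS: "w \<in> V - {u, v}" using w by auto
      have e1: "{x, w} \<in> E" using Sch[OF xS wS] w by (auto simp: doubleton_eq_iff)
      have e2: "{w, y1} \<in> E" using Sch[OF wS y1S] w by (auto simp: doubleton_eq_iff)
      have y1v: "{y1, v} \<in> E" using nbD'[OF y1A] .
      have d: "distinct [u, x, w, y1, v]" using w bb xS y1S xy1ne by auto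
      have "c {u, x} = c {w, y1} \<or> c {u, x} = c {y1, v} \<or> c {x, w} = c {y1, v}"
        by (rule bad5[OF b ux e1 e2 y1v d])
      moreover have "c {y0, v} \<noteq> c {v, y1}" using col_ne[OF y0v] nbD[OF y1A] y1ne by auto
      moreover have "c {x, w} \<noteq> c {x, y0}" using col_ne'[OF e1 xy0] w by auto
      ultimately show ?thesis using cux cxy by (auto simp: insert_commute)
    qed
    have cC: "card ?C \<le> 1"
    proof (rule ccontr)
      assume "\<not> ?thesis"
      then obtain w1 w2 where w: "w1 \<in> ?C" "w2 \<in> ?C" "w1 \<noteq> w2"
        using two_elems[of ?C] finV by auto
      have "c {w1, y1} = c {w2, y1}" using colw[OF w(1)] colw[OF w(2)] by simp
      moreover have "{w1, y1} \<in> E" "{y1, w2} \<in> E"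
        using Sch[of w1 y1] Sch[of y1 w2] w y1S by (auto simp: doubleton_eq_iff insert_commute)
      ultimately show False using col_ne[of w1 y1 w2] w(3) by (metis insert_commute)
    qed
    have "card V \<le> 6"
    proof -
      have sub: "{u, v, x, y0, y1} \<subseteq> V" using bb xS y0S y1S by auto
      have "card V = card {u, v, x, y0, y1} + card ?C"
        using card_Diff_subset[OF _ sub] card_mono[OF finV sub] finV by simp
      moreover have "card {u, v, x, y0, y1} \<le> 5" by (simp add: card_insert_le_m1)
      ultimately show ?thesis using cC by simp
    qed
    show ?thesis
      by (rule F2[of u v x y0 y1]) (use bb xS y0S y1S xy0ne xy1ne y1ne Ax Av Sch \<open>card V \<le> 6\<close> in auto)
  qed
qed

lemma case_a2b2:
  assumes b: "bad u v" and a2: "card (A u) = 2" and b2: "card (A v) = 2"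
  shows "goal V E"
proof -
  note bb = bad_basic[OF b]
  have finQ: "finite (Q u v)" by (rule finite_subset[of _ "A u \<times> A v"]) (auto simp: Q_def finA)
  have cQ: "card (Q u v) = 2" using cardP[OF b] cardPQ[of u v] cardQ1[OF b] a2 b2 by simp
  have cP: "card (P u v) = 2" using cardPQ[of u v] cQ a2 b2 by simp
  have mx: "card (P u v) + 2 \<ge> card (A u) + card (A v)" using cP a2 b2 by simp
  have injf: "inj_on fst (Q u v)" by (rule inj_onI) (auto simp: Q_def intro: Q_inj1[OF b])
  have "card (fst ` Q u v) = 2" using card_image[OF injf] cQ by simp
  moreover have "fst ` Q u v \<subseteq> A u" by (auto simp: Q_def)
  ultimately have fQ: "fst ` Q u v = A u" using card_subset_eq[OF finA, of "fst ` Q u v"] a2 by simp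
  obtain x0 x1 where Ax: "A u = {x0, x1}" and x01: "x0 \<noteq> x1" using a2 card_2_iff[of "A u"] by blast
  have "x0 \<in> fst ` Q u v" using fQ Ax by simp
  then obtain pr0 where "pr0 \<in> Q u v" "fst pr0 = x0" by blast
  then obtain y0 where q0: "(x0, y0) \<in> Q u v" by (metis prod.collapse)
  have "x1 \<in> fst ` Q u v" using fQ Ax by simp
  then obtain pr1 where "pr1 \<in> Q u v" "fst pr1 = x1" by blast
  then obtain y1 where q1: "(x1, y1) \<in> Q u v" by (metis prod.collapse)
  have x0A: "x0 \<in> A u" and x1A: "x1 \<in> A u" using Ax by auto
  have y0A: "y0 \<in> A v" and e00: "{x0, y0} \<in> E" using q0 by (auto simp: Q_def)
  have y1A: "y1 \<in> A v" and e11: "{x1, y1} \<in> E" using q1 by (auto simp: Q_def)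
  have y01: "y0 \<noteq> y1" using Q_inj2[OF b x0A x1A y0A e00] e11 x01 by blast
  have Av: "A v = {y0, y1}"
  proof -
    have "{y0, y1} \<subseteq> A v" using y0A y1A by auto
    moreover have "card {y0, y1} = 2" using y01 by simp
    ultimately show ?thesis using card_subset_eq[OF finA] b2 by metis
  qed
  have n01: "{x0, y1} \<notin> E" using Q_inj1[OF b x0A y0A y1A e00] y01 by blast
  have n10: "{x1, y0} \<notin> E" using Q_inj1[OF b x1A y1A y0A e11] y01 by blast
  have Pe: "P u v = {(x0, y1), (x1, y0)}"
    using Ax Av e00 e11 n01 n10 by (auto simp: P_def)
  have x0S: "x0 \<in> V - {u, v}" and x1S: "x1 \<in> V - {u, v}" using bb(4) x0A x1A by auto
  have y0S: "y0 \<in> V - {u, v}" and y1S: "y1 \<in> V - {u, v}" using bb(5) y0A y1A by auto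
  have dxy: "x0 \<noteq> y0" "x0 \<noteq> y1" "x1 \<noteq> y0" "x1 \<noteq> y1"
    using bb(6) x0A x1A y0A y1A by auto
  have Sch: "p \<in> V - {u, v} \<Longrightarrow> q \<in> V - {u, v} \<Longrightarrow> p \<noteq> q \<Longrightarrow>
       ({p, q} \<in> E \<longleftrightarrow> {p, q} \<noteq> {x0, y1} \<and> {p, q} \<noteq> {x1, y0})" for p q
  proof -
    assume h: "p \<in> V - {u, v}" "q \<in> V - {u, v}" "p \<noteq> q"
    show ?thesis
    proof
      assume "{p, q} \<in> E" then show "{p, q} \<noteq> {x0, y1} \<and> {p, q} \<noteq> {x1, y0}" using n01 n10 by auto
    next
      assume ne: "{p, q} \<noteq> {x0, y1} \<and> {p, q} \<noteq> {x1, y0}"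
      show "{p, q} \<in> E"
      proof (rule ccontr)
        assume "{p, q} \<notin> E"
        then obtain x' y' where "(x', y') \<in> P u v" "{p, q} = {x', y'}" using maximal[OF b mx h] by blast
        then show False using ne Pe by auto
      qed
    qed
  qed
  have ux0: "{u, x0} \<in> E" using nbD[OF x0A] .
  have ux1: "{u, x1} \<in> E" using nbD[OF x1A] .
  have y1v: "{y1, v} \<in> E" using nbD'[OF y1A] .
  have c1: "c {u, x1} = c {y1, v}" by (rule bad_col[OF b x1A y1A e11])
  let ?C = "V - {u, v, x0, x1, y0, y1}"
  have colw: "c {w, y1} = c {u, x0} \<or> c {x0, w} = c {u, x1}" if w: "w \<in> ?C" for w
  proof -
    have wS: "w \<in> V - {u, v}" using w by auto
    have e1: "{x0, w} \<in> E" using Sch[OF x0S wS] w by (auto simp: doubleton_eq_iff)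
    have e2: "{w, y1} \<in> E" using Sch[OF wS y1S] w by (auto simp: doubleton_eq_iff)
    have d: "distinct [u, x0, w, y1, v]" using w bb x0S y1S dxy by auto
    have "c {u, x0} = c {w, y1} \<or> c {u, x0} = c {y1, v} \<or> c {x0, w} = c {y1, v}"
      by (rule bad5[OF b ux0 e1 e2 y1v d])
    moreover have "c {u, x0} \<noteq> c {u, x1}" using col_ne'[OF ux0 ux1] x01 by simp
    ultimately show ?thesis using c1 by auto
  qed
  have cC: "card ?C \<le> 2"
  proof (rule ccontr)
    assume "\<not> ?thesis"
    then obtain w1 w2 w3 where w: "w1 \<in> ?C" "w2 \<in> ?C" "w3 \<in> ?C" "w1 \<noteq> w2" "w1 \<noteq> w3" "w2 \<noteq> w3"
      using three_elems[of ?C] finV by auto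
    have ey: "{wa, y1} \<in> E" if "wa \<in> ?C" for wa
      using Sch[of wa y1] that y1S by (auto simp: doubleton_eq_iff)
    have ex: "{x0, wa} \<in> E" if "wa \<in> ?C" for wa
      using Sch[of x0 wa] that x0S by (auto simp: doubleton_eq_iff)
    have A1: "c {wa, y1} \<noteq> c {wb, y1}" if "wa \<in> ?C" "wb \<in> ?C" "wa \<noteq> wb" for wa wb
      using col_ne[of wa y1 wb] ey[OF that(1)] ey[OF that(2)] that(3) by (metis insert_commute)
    have A2: "c {x0, wa} \<noteq> c {x0, wb}" if "wa \<in> ?C" "wb \<in> ?C" "wa \<noteq> wb" for wa wb
      using col_ne'[of x0 wa wb] ex[OF that(1)] ex[OF that(2)] that(3) by blast
    show False
      using colw[OF w(1)] colw[OF w(2)] colw[OF w(3)] A1[OF w(1,2,4)] A1[OF w(1,3,5)] A1[OF w(2,3,6)]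
        A2[OF w(1,2,4)] A2[OF w(1,3,5)] A2[OF w(2,3,6)] by metis
  qed
  have "card V \<le> 8"
  proof -
    have sub: "{u, v, x0, x1, y0, y1} \<subseteq> V" using bb x0S x1S y0S y1S by auto
    have "card V = card {u, v, x0, x1, y0, y1} + card ?C"
      using card_Diff_subset[OF _ sub] card_mono[OF finV sub] finV by simp
    moreover have "card {u, v, x0, x1, y0, y1} \<le> 6" by (simp add: card_insert_le_m1)
    ultimately show ?thesis using cC by simp
  qed
  show ?thesis
    by (rule F3[of u v x0 x1 y0 y1]) (use bb x0S x1S y0S y1S x01 y01 dxy Ax Av Sch \<open>card V \<le> 8\<close> in auto)
qed

lemma bad_goal: "bad u v \<Longrightarrow> goal V E"
  using cases_ab[of u v] case_a1[of u v] case_a1[of v u] bad_sym[of u v] case_a2b2[of u v] by blast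

end

context dg begin

lemma chi_ex: "\<exists>c. proper_edge_colouring E c \<and> c ` E \<subseteq> {..<card E}"
proof -
  obtain h where h: "bij_betw h E {0..<card E}" using ex_bij_betw_finite_nat[OF finE] by blast
  have "proper_edge_colouring E h"
    using h unfolding proper_edge_colouring_def bij_betw_def inj_on_def by blast
  moreover have "h ` E \<subseteq> {..<card E}" using h by (auto simp: bij_betw_def)
  ultimately show ?thesis by blast
qed

lemma chi_opt: "\<exists>c. proper_edge_colouring E c \<and> c ` E \<subseteq> {..<chromatic_index E}"
  unfolding chromatic_index_def by (rule LeastI_ex) (rule exI, rule chi_ex)

lemma prc_le: "good V E c k \<Longrightarrow> prc V E \<le> k"
  unfolding prc_def good_def by (rule Least_le) blast

lemma chi_le_prc: "good V E c k \<Longrightarrow> chromatic_index E \<le> prc V E"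
proof -
  assume g: "good V E c k"
  have "\<exists>c. proper_edge_colouring E c \<and> c ` E \<subseteq> {..<prc V E} \<and> rainbow_connected V E c"
    unfolding prc_def by (rule LeastI_ex) (use g in \<open>auto simp: good_def\<close>)
  then show ?thesis unfolding chromatic_index_def by (auto intro: Least_le)
qed

lemma deg_le_chi: "card (nb V E z) \<le> chromatic_index E"
proof -
  obtain c where c: "proper_edge_colouring E c" "c ` E \<subseteq> {..<chromatic_index E}" using chi_opt by blast
  have inj: "inj_on (\<lambda>w. c {z, w}) (nb V E z)"
  proof (rule inj_onI)
    fix a b assume ab: "a \<in> nb V E z" "b \<in> nb V E z" "c {z, a} = c {z, b}"
    show "a = b"
    proof (rule ccontr)
      assume "a \<noteq> b"
      then have "{z, a} \<noteq> {z, b}" by (auto simp: doubleton_eq_iff)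
      moreover have "{z, a} \<in> E" "{z, b} \<in> E" using ab by (auto simp: nb_def)
      moreover have "{z, a} \<inter> {z, b} \<noteq> {}" by auto
      ultimately have "c {z, a} \<noteq> c {z, b}" using c(1) unfolding proper_edge_colouring_def by simp
      then show False using ab(3) by simp
    qed
  qed
  have "(\<lambda>w. c {z, w}) ` nb V E z \<subseteq> {..<chromatic_index E}" using c(2) by (auto simp: nb_def)
  then have "card ((\<lambda>w. c {z, w}) ` nb V E z) \<le> chromatic_index E"
    using card_mono[OF finite_lessThan] card_lessThan by metis
  then show ?thesis using card_image[OF inj] by simp
qed

lemma main: "prc V E = chromatic_index E \<or> graph_iso V E P4_V P4_E \<or>
         graph_iso V E Z2_V Z2_E \<or> graph_iso V E G63_V G63_E"
proof -
  obtain c0 where c0: "proper_edge_colouring E c0" "c0 ` E \<subseteq> {..<chromatic_index E}" using chi_opt by blast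
  show ?thesis
  proof (cases "rainbow_connected V E c0")
    case True
    then have g: "good V E c0 (chromatic_index E)" using c0 by (simp add: good_def)
    show ?thesis using prc_le[OF g] chi_le_prc[OF g] by simp
  next
    case False
    interpret X: dgc V E c0 by unfold_locales (rule c0(1))
    obtain u v where "u \<in> V" "v \<in> V" "u \<noteq> v" "\<not> (\<exists>xs. rainbow_path V E c0 xs \<and> hd xs = u \<and> last xs = v)"
      using False unfolding rainbow_connected_def by blast
    then have "X.bad u v" by (simp add: X.bad_def)
    then have "goal V E" by (rule X.bad_goal)
    then show ?thesis
    proof (unfold goal_def, elim disjE exE conjE)
      fix c k z assume g: "good V E c k" and z: "z \<in> V" and kz: "k \<le> card (nb V E z)"
      have "prc V E \<le> chromatic_index E" using prc_le[OF g] kz deg_le_chi[of z] by simp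
      then show ?thesis using chi_le_prc[OF g] by simp
    qed blast+
  qed
qed

end

theorem theorem6p3:
  fixes V :: "'a set" and E :: "'a set set"
  assumes "connected_graph V E"
    and "card V \<ge> 3"
    and "card E \<ge> ((card V - 2) choose 2) + 2"
  shows "prc V E = chromatic_index E \<or> graph_iso V E P4_V P4_E \<or>
         graph_iso V E Z2_V Z2_E \<or> graph_iso V E G63_V G63_E"
proof -
  interpret dg V E by unfold_locales (use assms in auto)
  show ?thesis by (rule main)
qed

end
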